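(* Let $X,Y$ be reflexive Banach spaces, $\varphi:X\times Y\to\mathbb{R}\cup\{+\infty\}$ a proper convex lower semicontinuous function with $(0,0)\in{\rm dom}(\varphi)$ and $\lim_{\|x\|+\|y\|\to\infty}\frac{\varphi(x,y)}{\|x\|+\|y\|}=+\infty$, $A:X\to Y^*$ a bounded linear operator, and $B_1:X\to X^*$, $B_2:Y\to Y^*$ bounded linear skew-adjoint operators. Then the functional $$I(x,y)=\varphi(x,y)+\varphi^*(-A^*y+B_1x,\ Ax+B_2y)$$ has infimum $0$ on $X\times Y$, attained at some $(\bar x,\bar y)$, and $$(-A^*\bar y+B_1\bar x,\ A\bar x+B_2\bar y)\in\partial\varphi(\bar x,\bar y).$$
   Context: $\varphi^*$ is the Legendre conjugate of $\varphi$ on $X^*\times Y^*$; $\partial\varphi$ is the convex subdifferential. *)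

theory Defs
  imports "HOL-Analysis.Analysis"
begin

definition canon_emb :: "'a::real_normed_vector \<Rightarrow> (('a \<Rightarrow>\<^sub>L real) \<Rightarrow>\<^sub>L real)" where
  "canon_emb x = Blinfun (\<lambda>f. blinfun_apply f x)"

definition reflexive_space :: "'a::real_normed_vector itself \<Rightarrow> bool" where
  "reflexive_space _ \<longleftrightarrow> surj (canon_emb :: 'a \<Rightarrow> _)"

definition proper_fun :: "('a \<Rightarrow> ereal) \<Rightarrow> bool" where
  "proper_fun f \<longleftrightarrow> (\<forall>z. f z \<noteq> -\<infinity>) \<and> (\<exists>z. f z \<noteq> \<infinity>)"

definition convex_fun :: "('a::real_vector \<Rightarrow> ereal) \<Rightarrow> bool" where
  "convex_fun f \<longleftrightarrow> (\<forall>u v t. 0 < t \<and> t < 1 \<longrightarrow>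
      f (t *\<^sub>R u + (1 - t) *\<^sub>R v) \<le> ereal t * f u + ereal (1 - t) * f v)"

definition lsc_fun :: "('a::topological_space \<Rightarrow> ereal) \<Rightarrow> bool" where
  "lsc_fun f \<longleftrightarrow> (\<forall>c::real. closed {z. f z \<le> ereal c})"

definition dom_fun :: "('a \<Rightarrow> ereal) \<Rightarrow> 'a set" where
  "dom_fun f = {z. f z < \<infinity>}"

definition legendre ::
  "('a::real_normed_vector \<times> 'b::real_normed_vector \<Rightarrow> ereal)
    \<Rightarrow> ('a \<Rightarrow>\<^sub>L real) \<times> ('b \<Rightarrow>\<^sub>L real) \<Rightarrow> ereal" where
  "legendre \<phi> pq = (SUP z. ereal (blinfun_apply (fst pq) (fst z) + blinfun_apply (snd pq) (snd z)) - \<phi> z)"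

definition subdiff ::
  "('a::real_normed_vector \<times> 'b::real_normed_vector \<Rightarrow> ereal)
    \<Rightarrow> 'a \<times> 'b \<Rightarrow> (('a \<Rightarrow>\<^sub>L real) \<times> ('b \<Rightarrow>\<^sub>L real)) set" where
  "subdiff \<phi> z = {pq. \<phi> z \<noteq> \<infinity> \<and> (\<forall>w. \<phi> w \<ge> \<phi> z +
       ereal (blinfun_apply (fst pq) (fst w - fst z) + blinfun_apply (snd pq) (snd w - snd z)))}"

text \<open>Adjoint of A : X \<rightarrow> Y*, applied to y \<in> Y (identified with its image in Y**).\<close>
definition adj_app :: "('a::real_normed_vector \<Rightarrow>\<^sub>L ('b::real_normed_vector \<Rightarrow>\<^sub>L real)) \<Rightarrow> 'b \<Rightarrow> ('a \<Rightarrow>\<^sub>L real)" where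
  "adj_app A y = Blinfun (\<lambda>x. blinfun_apply (blinfun_apply A x) y)"

definition skew_adjoint :: "('a::real_normed_vector \<Rightarrow>\<^sub>L ('a \<Rightarrow>\<^sub>L real)) \<Rightarrow> bool" where
  "skew_adjoint B \<longleftrightarrow> (\<forall>x x'. blinfun_apply (blinfun_apply B x) x' = - blinfun_apply (blinfun_apply B x') x)"

end

theory Submission
  imports Defs
begin

definition lin_graph :: "('c::real_vector \<times> real) set \<Rightarrow> bool" where
 "lin_graph G \<longleftrightarrow> (\<forall>x a b. (x,a)\<in>G \<longrightarrow> (x,b)\<in>G \<longrightarrow> a = b) \<and>
    (\<forall>x a y b. (x,a)\<in>G \<longrightarrow> (y,b)\<in>G \<longrightarrow> (x+y,a+b)\<in>G) \<and>
    (\<forall>x a c. (x,a)\<in>G \<longrightarrow> (c *\<^sub>R x, c*a) \<in> G)"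

lemma mul_pos_aux1: "c \<le> P - b/t \<Longrightarrow> 0<t \<Longrightarrow> t*c \<le> t*P - (b::real)"
proof -
  assume a: "c \<le> P - b/t" "0<t"
  have "t*c \<le> t*(P - b/t)" by (rule mult_left_mono) (use a in auto)
  also have "\<dots> = t*P - b" using a by (simp add: right_diff_distrib)
  finally show ?thesis .
qed

lemma mul_pos_aux2: "b/s - P \<le> c \<Longrightarrow> 0<s \<Longrightarrow> b - s*P \<le> s*(c::real)"
proof -
  assume a: "b/s - P \<le> c" "0<s"
  have "s*(b/s - P) \<le> s*c" by (rule mult_left_mono) (use a in auto)
  moreover have "s*(b/s - P) = b - s*P" using a by (simp add: right_diff_distrib)
  ultimately show ?thesis by simp
qed

lemma hb_extend_step:
  fixes p :: "'c::real_vector \<Rightarrow> real"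
  assumes sub: "\<And>x y. p (x+y) \<le> p x + p y" and hom: "\<And>a x. a > 0 \<Longrightarrow> p (a *\<^sub>R x) = a * p x"
    and G: "lin_graph G" "\<forall>(x,a)\<in>G. a \<le> p x" and G0: "(0,0) \<in> G"
    and y: "y \<notin> fst ` G"
  shows "\<exists>G'. lin_graph G' \<and> (\<forall>(x,a)\<in>G'. a \<le> p x) \<and> G \<subseteq> G' \<and> G' \<noteq> G"
proof -
  have Gf: "\<And>x a b. (x,a)\<in>G \<Longrightarrow> (x,b)\<in>G \<Longrightarrow> a = b"
   and Ga: "\<And>x a y b. (x,a)\<in>G \<Longrightarrow> (y,b)\<in>G \<Longrightarrow> (x+y,a+b)\<in>G"
   and Gs: "\<And>x a c. (x,a)\<in>G \<Longrightarrow> (c *\<^sub>R x, c*a) \<in> G" using G(1) unfolding lin_graph_def by blast+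
  have Gp: "\<And>x a. (x,a)\<in>G \<Longrightarrow> a \<le> p x" using G(2) by blast
  define S where "S = {b - p (x - y) | x b. (x,b)\<in>G}"
  have bnd: "s \<le> p (x' + y) - b'" if sS: "s \<in> S" and xb': "(x',b')\<in>G" for s x' b'
  proof -
    obtain x b where xb: "s = b - p (x - y)" "(x,b)\<in>G" using sS unfolding S_def by blast
    have "b + b' \<le> p (x + x')" using Gp[OF Ga[OF xb(2) xb']] .
    also have "\<dots> \<le> p (x - y) + p (x' + y)" using sub[of "x - y" "x' + y"] by (simp add: algebra_simps)
    finally show ?thesis using xb by simp
  qed
  have Sne: "S \<noteq> {}" using G0 S_def by blast
  have Sbdd: "bdd_above S" using bnd[OF _ G0] by (auto simp: bdd_above_def)
  define c where "c = Sup S"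
  have c1: "b - p (x - y) \<le> c" if "(x,b)\<in>G" for x b
    unfolding c_def by (rule cSup_upper[OF _ Sbdd]) (use that S_def in blast)
  have c2: "c \<le> p (x' + y) - b'" if "(x',b')\<in>G" for x' b'
    unfolding c_def by (rule cSup_least[OF Sne]) (use bnd that in blast)
  define G' where "G' = {(x + t *\<^sub>R y, b + t * c) | x b t. (x,b)\<in>G}"
  have G'_mem: "(x,a)\<in>G' \<longleftrightarrow> (\<exists>x1 b1 t. (x1,b1)\<in>G \<and> x = x1 + t *\<^sub>R y \<and> a = b1 + t*c)" for x a
    unfolding G'_def by blast
  have yG': "(y, c) \<in> G'"
  proof -
    have "(y,c) = (0 + 1 *\<^sub>R y, 0 + 1*c)" by simp
    then show ?thesis unfolding G'_def using G0 by blast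
  qed
  have sub': "G \<subseteq> G'" unfolding G'_def by (force intro: exI[of _ 0])
  have uniq: "t1 = t2 \<and> x1 = x2" if "(x1,b1)\<in>G" "(x2,b2)\<in>G" "x1 + t1 *\<^sub>R y = x2 + t2 *\<^sub>R y" for x1 x2 b1 b2 t1 t2
  proof (rule ccontr)
    assume ne: "\<not> (t1 = t2 \<and> x1 = x2)"
    then have tne: "t1 \<noteq> t2" using that(3) by auto
    have "(x1 + (-1) *\<^sub>R x2, b1 + (-1) * b2) \<in> G" using Ga[OF that(1) Gs[OF that(2)]] .
    then have "((1/(t2 - t1)) *\<^sub>R (x1 - x2), (1/(t2-t1)) * (b1 - b2)) \<in> G" using Gs by fastforce
    moreover have "(1/(t2 - t1)) *\<^sub>R (x1 - x2) = y"
    proof -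
      have "x1 - x2 = (t2 - t1) *\<^sub>R y" using that(3) by (simp add: algebra_simps)
      then show ?thesis using tne by simp
    qed
    ultimately show False using y by force
  qed
  have lg: "lin_graph G'"
    unfolding lin_graph_def
  proof (intro conjI allI impI)
    fix x a b assume "(x,a)\<in>G'" "(x,b)\<in>G'"
    then obtain x1 b1 t1 x2 b2 t2 where "(x1,b1)\<in>G" "(x2,b2)\<in>G" "x = x1 + t1 *\<^sub>R y" "a = b1 + t1*c"
      "x = x2 + t2 *\<^sub>R y" "b = b2 + t2*c" unfolding G'_mem by blast
    then show "a = b" using uniq Gf by metis
  next
    fix x a z b assume "(x,a)\<in>G'" "(z,b)\<in>G'"
    then obtain x1 b1 t1 x2 b2 t2 where h: "(x1,b1)\<in>G" "(x2,b2)\<in>G" "x = x1 + t1 *\<^sub>R y" "a = b1 + t1*c"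
      "z = x2 + t2 *\<^sub>R y" "b = b2 + t2*c" unfolding G'_mem by blast
    have "(x1+x2, b1+b2)\<in>G" using Ga h by blast
    moreover have "x + z = (x1+x2) + (t1+t2) *\<^sub>R y" "a + b = (b1+b2) + (t1+t2)*c" using h by (auto simp: algebra_simps)
    ultimately show "(x+z, a+b)\<in>G'" unfolding G'_mem by blast
  next
    fix x a r assume "(x,a)\<in>G'"
    then obtain x1 b1 t1 where h: "(x1,b1)\<in>G" "x = x1 + t1 *\<^sub>R y" "a = b1 + t1*c" unfolding G'_mem by blast
    have "(r *\<^sub>R x1, r*b1)\<in>G" using Gs h by blast
    moreover have "r *\<^sub>R x = r *\<^sub>R x1 + (r*t1) *\<^sub>R y" "r * a = r*b1 + (r*t1)*c" using h by (auto simp: algebra_simps)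
    ultimately show "(r *\<^sub>R x, r*a)\<in>G'" unfolding G'_mem by blast
  qed
  have dom: "\<forall>(x,a)\<in>G'. a \<le> p x"
  proof (clarify)
    fix x a assume "(x,a)\<in>G'"
    then obtain x1 b1 t where h: "(x1,b1)\<in>G" "x = x1 + t *\<^sub>R y" "a = b1 + t*c" unfolding G'_mem by blast
    consider "t = 0" | "t > 0" | "t < 0" by linarith
    then show "a \<le> p x"
    proof cases
      case 1 then show ?thesis using h Gp by simp
    next
      case 2
      have m: "((1/t) *\<^sub>R x1, (1/t)*b1)\<in>G" using Gs h by blast
      have "c \<le> p ((1/t) *\<^sub>R x1 + y) - (1/t)*b1" using c2[OF m] .
      then have "t * c \<le> t * p ((1/t) *\<^sub>R x1 + y) - b1" using 2
        using mul_pos_aux1[of c _ b1 t] by simp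
      also have "t * p ((1/t) *\<^sub>R x1 + y) = p (t *\<^sub>R ((1/t) *\<^sub>R x1 + y))" using hom 2 by simp
      also have "t *\<^sub>R ((1/t) *\<^sub>R x1 + y) = x" using 2 h by (simp add: scaleR_add_right)
      finally show ?thesis using h by simp
    next
      case 3
      define s where "s = -t"
      have s: "s > 0" using 3 s_def by simp
      have m: "((1/s) *\<^sub>R x1, (1/s)*b1)\<in>G" using Gs h by blast
      have "(1/s)*b1 - p ((1/s) *\<^sub>R x1 - y) \<le> c" using c1[OF m] .
      then have "b1 - s * p ((1/s) *\<^sub>R x1 - y) \<le> s * c" using s
        using mul_pos_aux2[of b1 s _ c] by simp
      also have "s * p ((1/s) *\<^sub>R x1 - y) = p (s *\<^sub>R ((1/s) *\<^sub>R x1 - y))" using hom s by simp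
      also have "s *\<^sub>R ((1/s) *\<^sub>R x1 - y) = x" using s h s_def by (simp add: scaleR_diff_right)
      finally show ?thesis using h s_def by simp
    qed
  qed
  have "G' \<noteq> G" using yG' y by force
  then show ?thesis using lg dom sub' by blast
qed

lemma hb_analytic:
  fixes p :: "'c::real_vector \<Rightarrow> real"
  assumes sub: "\<And>x y. p (x+y) \<le> p x + p y" and hom: "\<And>a x. a > 0 \<Longrightarrow> p (a *\<^sub>R x) = a * p x"
    and nonneg: "\<And>x. 0 \<le> p x" and px0: "1 \<le> p x0"
  shows "\<exists>f. linear f \<and> f x0 = 1 \<and> (\<forall>x. f x \<le> p x)"
proof -
  have p0: "p 0 = 0" using hom[of 2 0] by simp
  have x0: "x0 \<noteq> 0" using p0 px0 by auto
  define G0 where "G0 = {(t *\<^sub>R x0, t) | t. True}"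
  define \<A> where "\<A> = {G. lin_graph G \<and> G0 \<subseteq> G \<and> (\<forall>(x,a)\<in>G. a \<le> p x)}"
  have G0A: "G0 \<in> \<A>"
    unfolding \<A>_def
  proof (intro CollectI conjI)
    show "lin_graph G0" unfolding lin_graph_def G0_def
    proof (intro conjI allI impI)
      fix x a b assume "(x, a) \<in> {(t *\<^sub>R x0, t) |t. True}" "(x, b) \<in> {(t *\<^sub>R x0, t) |t. True}"
      then have "a *\<^sub>R x0 = b *\<^sub>R x0" by auto
      then show "a = b" using x0 by (simp add: scaleR_cancel_right)
    next
      fix x a y b assume "(x, a) \<in> {(t *\<^sub>R x0, t) |t. True}" "(y, b) \<in> {(t *\<^sub>R x0, t) |t. True}"
      then have "(x+y, a+b) = ((a+b) *\<^sub>R x0, a+b)" by (auto simp: scaleR_add_left)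
      then show "(x+y, a+b) \<in> {(t *\<^sub>R x0, t) |t. True}" by blast
    next
      fix x a c assume "(x, a) \<in> {(t *\<^sub>R x0, t) |t. True}"
      then have "(c *\<^sub>R x, c*a) = ((c*a) *\<^sub>R x0, c*a)" by auto
      then show "(c *\<^sub>R x, c*a) \<in> {(t *\<^sub>R x0, t) |t. True}" by blast
    qed
    show "\<forall>(x, a)\<in>G0. a \<le> p x"
    proof (clarify)
      fix x a assume "(x,a) \<in> G0"
      then have xa: "x = a *\<^sub>R x0" unfolding G0_def by auto
      show "a \<le> p x"
      proof (cases "a > 0")
        case True
        then have "p x = a * p x0" using hom xa by simp
        moreover have "a * 1 \<le> a * p x0" using True px0 by (intro mult_left_mono) auto
        ultimately show ?thesis by simp
      next
        case False then show ?thesis using nonneg[of x] by simp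
      qed
    qed
  qed simp
  have "\<exists>M\<in>\<A>. \<forall>X\<in>\<A>. M \<subseteq> X \<longrightarrow> X = M"
  proof (rule subset_Zorn_nonempty)
    show "\<A> \<noteq> {}" using G0A by blast
  next
    fix \<C> assume Cne: "\<C> \<noteq> {}" and ch: "subset.chain \<A> \<C>"
    have CA: "\<C> \<subseteq> \<A>" and tot: "\<And>X Y. X\<in>\<C> \<Longrightarrow> Y\<in>\<C> \<Longrightarrow> X \<subseteq> Y \<or> Y \<subseteq> X"
      using ch unfolding subset_chain_def by auto
    have two: "\<exists>G\<in>\<C>. u \<in> G \<and> v \<in> G" if "u \<in> \<Union>\<C>" "v \<in> \<Union>\<C>" for u v
      using that tot by blast
    have lgC: "\<And>G. G \<in> \<C> \<Longrightarrow> lin_graph G" using CA unfolding \<A>_def by auto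
    show "\<Union>\<C> \<in> \<A>" unfolding \<A>_def
    proof (intro CollectI conjI)
      show "lin_graph (\<Union>\<C>)" unfolding lin_graph_def
      proof (intro conjI allI impI)
        fix x a b assume h: "(x, a) \<in> \<Union>\<C>" "(x, b) \<in> \<Union>\<C>"
        then obtain G where "G\<in>\<C>" "(x,a)\<in>G" "(x,b)\<in>G" using two by blast
        then show "a = b" using lgC unfolding lin_graph_def by blast
      next
        fix x a y b assume h: "(x, a) \<in> \<Union>\<C>" "(y, b) \<in> \<Union>\<C>"
        then obtain G where "G\<in>\<C>" "(x,a)\<in>G" "(y,b)\<in>G" using two by blast
        then show "(x+y, a+b) \<in> \<Union>\<C>" using lgC unfolding lin_graph_def by blast
      next
        fix x a c assume h: "(x, a) \<in> \<Union>\<C>"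
        then obtain G where "G\<in>\<C>" "(x,a)\<in>G" by blast
        then show "(c *\<^sub>R x, c*a) \<in> \<Union>\<C>" using lgC unfolding lin_graph_def by blast
      qed
      show "G0 \<subseteq> \<Union>\<C>" using Cne CA unfolding \<A>_def by blast
      show "\<forall>(x, a)\<in>\<Union>\<C>. a \<le> p x" using CA unfolding \<A>_def by blast
    qed
  qed
  then obtain M where MA: "M \<in> \<A>" and Mmax: "\<And>X. X \<in> \<A> \<Longrightarrow> M \<subseteq> X \<Longrightarrow> X = M" by blast
  have lgM: "lin_graph M" and G0M: "G0 \<subseteq> M" and pM: "\<forall>(x,a)\<in>M. a \<le> p x" using MA unfolding \<A>_def by auto
  have Mf: "\<And>x a b. (x,a)\<in>M \<Longrightarrow> (x,b)\<in>M \<Longrightarrow> a = b"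
   and Ma: "\<And>x a y b. (x,a)\<in>M \<Longrightarrow> (y,b)\<in>M \<Longrightarrow> (x+y,a+b)\<in>M"
   and Ms: "\<And>x a c. (x,a)\<in>M \<Longrightarrow> (c *\<^sub>R x, c*a) \<in> M" using lgM unfolding lin_graph_def by blast+
  have 00: "(0,0) \<in> M" using G0M unfolding G0_def by force
  have x01: "(x0,1) \<in> M"
  proof -
    have "(x0,1) = (1 *\<^sub>R x0, 1::real)" by simp
    then show ?thesis using G0M unfolding G0_def by blast
  qed
  have dom: "\<exists>a. (x,a) \<in> M" for x
  proof (rule ccontr)
    assume "\<nexists>a. (x, a) \<in> M"
    then have "x \<notin> fst ` M" by force
    from hb_extend_step[OF sub hom lgM pM 00 this] obtain G' where
      G': "lin_graph G'" "\<forall>(x,a)\<in>G'. a \<le> p x" "M \<subseteq> G'" "G' \<noteq> M" by blast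
    then have "G' \<in> \<A>" using G0M unfolding \<A>_def by blast
    then show False using Mmax G' by blast
  qed
  define f where "f x = (THE a. (x,a)\<in>M)" for x
  have fM: "(x, f x) \<in> M" for x
    unfolding f_def using dom[of x] Mf by (metis theI)
  have fe: "(x,a) \<in> M \<Longrightarrow> f x = a" for x a using fM Mf by blast
  have "linear f"
  proof (rule linearI)
    show "f (x + y) = f x + f y" for x y using fe[OF Ma[OF fM fM]] .
    show "f (c *\<^sub>R x) = c *\<^sub>R f x" for c x using fe[OF Ms[OF fM]] by simp
  qed
  moreover have "f x0 = 1" using fe[OF x01] .
  moreover have "f x \<le> p x" for x using pM fM by blast
  ultimately show ?thesis by blast
qed

lemma separation_point:
  fixes S :: "'c::real_normed_vector set"
  assumes clo: "closed S" and cvx: "convex S" and zS: "z \<notin> S"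
  shows "\<exists>(g::'c \<Rightarrow> real) c. bounded_linear g \<and> (\<forall>s\<in>S. g s \<le> c) \<and> c < g z"
proof (cases "S = {}")
  case True
  show ?thesis
  proof (intro exI conjI)
    show "bounded_linear (\<lambda>_::'c. 0::real)" by (rule bounded_linear_zero)
    show "\<forall>s\<in>S. (\<lambda>_::'c. 0::real) s \<le> -1" using True by simp
    show "(-1::real) < (\<lambda>_::'c. 0::real) z" by simp
  qed
next
  case False
  then obtain s0 where s0: "s0 \<in> S" by blast
  define d where "d = infdist z S"
  have d: "d > 0" unfolding d_def using infdist_pos_not_in_closed[OF clo False zS] .
  have dz: "d \<le> norm (z - s)" if "s \<in> S" for s
    unfolding d_def using infdist_le[OF that, of z] by (simp add: dist_norm)
  define r where "r = d/2"
  have r: "r > 0" "r < d" using d r_def by auto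
  define U where "U = {u. \<exists>s\<in>S. norm (u + s0 - s) < r}"
  have cU: "convex U" unfolding convex_alt
  proof (clarify)
    fix u v and t :: real assume u: "u \<in> U" and v: "v \<in> U" and t: "0 \<le> t" "t \<le> 1"
    obtain su where su: "su\<in>S" "norm (u + s0 - su) < r" using u U_def by blast
    obtain sv where sv: "sv\<in>S" "norm (v + s0 - sv) < r" using v U_def by blast
    have sS: "(1 - t) *\<^sub>R su + t *\<^sub>R sv \<in> S" using cvx su sv t unfolding convex_alt by auto
    have eq: "((1 - t) *\<^sub>R u + t *\<^sub>R v) + s0 - ((1 - t) *\<^sub>R su + t *\<^sub>R sv)
       = (1 - t) *\<^sub>R (u + s0 - su) + t *\<^sub>R (v + s0 - sv)" by (simp add: algebra_simps)
    have "norm ((1 - t) *\<^sub>R (u + s0 - su) + t *\<^sub>R (v + s0 - sv)) \<le> (1-t) * norm (u + s0 - su) + t * norm (v + s0 - sv)"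
      using t by (smt (verit) norm_scaleR norm_triangle_ineq abs_of_nonneg)
    also have "\<dots> < r"
    proof (cases "t = 0")
      case True then show ?thesis using su by simp
    next
      case False
      have "(1-t) * norm (u + s0 - su) \<le> (1-t) * r" using su t by (intro mult_left_mono) auto
      moreover have "t * norm (v + s0 - sv) < t * r" using sv t False by (intro mult_strict_left_mono) auto
      ultimately show ?thesis by (simp add: algebra_simps)
    qed
    finally have "norm (((1 - t) *\<^sub>R u + t *\<^sub>R v) + s0 - ((1 - t) *\<^sub>R su + t *\<^sub>R sv)) < r" using eq by simp
    then show "(1 - t) *\<^sub>R u + t *\<^sub>R v \<in> U" unfolding U_def using sS by blast
  qed
  have ballU: "norm u < r \<Longrightarrow> u \<in> U" for u unfolding U_def using s0 by force
  have U0: "0 \<in> U" using ballU r by simp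
  have x0U: "z - s0 \<notin> U"
  proof
    assume "z - s0 \<in> U"
    then obtain s where "s\<in>S" "norm (z - s) < r" unfolding U_def by auto
    then show False using dz r by force
  qed
  have expand: "\<exists>e>0. (1+e) *\<^sub>R u \<in> U" if uU: "u \<in> U" for u
  proof -
    obtain s where s: "s\<in>S" "norm (u + s0 - s) < r" using uU unfolding U_def by blast
    define e where "e = (r - norm (u + s0 - s)) / (norm u + 1)"
    have e: "e > 0" using s unfolding e_def by (intro divide_pos_pos) (auto simp: add_nonneg_pos)
    have "e * norm u < r - norm (u + s0 - s)"
    proof -
      have "e * norm u \<le> e * (norm u + 1) - e" by (simp add: algebra_simps)
      also have "e * (norm u + 1) = r - norm (u + s0 - s)" unfolding e_def
        by (metis add_nonneg_pos norm_ge_zero zero_less_one less_irrefl nonzero_eq_divide_eq mult.commute)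
      finally show ?thesis using e by simp
    qed
    moreover have "norm ((1+e) *\<^sub>R u + s0 - s) \<le> norm (u + s0 - s) + e * norm u"
    proof -
      have "(1+e) *\<^sub>R u + s0 - s = (u + s0 - s) + e *\<^sub>R u" by (simp add: algebra_simps)
      then show ?thesis using e by (metis norm_triangle_ineq norm_scaleR abs_of_pos)
    qed
    ultimately have "norm ((1+e) *\<^sub>R u + s0 - s) < r" by simp
    then show ?thesis using e s unfolding U_def by blast
  qed
  define T where "T x = {t. 0 < t \<and> (1/t) *\<^sub>R x \<in> U}" for x
  define p where "p x = Inf (T x)" for x
  have Tin: "t \<in> T x" if "t > norm x / r" for t x
  proof -
    have t: "t > 0" using that r by (smt (verit) divide_nonneg_pos norm_ge_zero)
    have "norm ((1/t) *\<^sub>R x) = norm x / t" using t by simp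
    also have "\<dots> < r" using that t r by (simp add: divide_less_eq mult.commute pos_divide_less_eq)
    finally show ?thesis unfolding T_def using t ballU by auto
  qed
  have Tne: "T x \<noteq> {}" for x using Tin[of x "norm x / r + 1"] by auto
  have Tbdd: "bdd_below (T x)" for x unfolding T_def bdd_below_def by (rule exI[of _ 0]) auto
  have Tup: "t' \<in> T x" if "t \<in> T x" "t \<le> t'" for t t' x
  proof -
    have t: "t > 0" "(1/t) *\<^sub>R x \<in> U" using that T_def by auto
    have t': "t' > 0" using t that by simp
    have "(1/t') *\<^sub>R x = (t/t') *\<^sub>R ((1/t) *\<^sub>R x) + (1 - t/t') *\<^sub>R 0" using t t' by simp
    moreover have "(t/t') *\<^sub>R ((1/t) *\<^sub>R x) + (1 - t/t') *\<^sub>R 0 \<in> U"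
      by (rule convexD[OF cU t(2) U0]) (use t t' that(2) in auto)
    ultimately show ?thesis unfolding T_def using t t' by simp
  qed
  have p_le: "p x \<le> t" if "t \<in> T x" for t x unfolding p_def using that Tbdd by (rule cInf_lower)
  have p_ge: "(\<And>t. t \<in> T x \<Longrightarrow> c \<le> t) \<Longrightarrow> c \<le> p x" for c x unfolding p_def using Tne by (rule cInf_greatest)
  have pnn: "0 \<le> p x" for x by (rule p_ge) (auto simp: T_def)
  have pnorm: "p x \<le> norm x / r" for x
  proof (rule field_le_epsilon)
    fix e :: real assume "e > 0"
    then show "p x \<le> norm x / r + e" using p_le Tin by simp
  qed
  have Tscale: "a * t \<in> T (a *\<^sub>R x)" if "t \<in> T x" "a > 0" for a t x
    using that unfolding T_def by (auto simp: mult_pos_pos)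
  have hle: "p (a *\<^sub>R x) \<le> a * p x" if a: "a > 0" for a x
  proof -
    have "p (a *\<^sub>R x) / a \<le> p x"
    proof (rule p_ge)
      fix t assume "t \<in> T x"
      then have "p (a *\<^sub>R x) \<le> a * t" using p_le Tscale a by blast
      then show "p (a *\<^sub>R x) / a \<le> t" using a by (simp add: divide_le_eq mult.commute)
    qed
    then show ?thesis using a by (simp add: divide_le_eq mult.commute)
  qed
  have hom: "p (a *\<^sub>R x) = a * p x" if a: "a > 0" for a x
  proof -
    have "p x = p ((1/a) *\<^sub>R (a *\<^sub>R x))" using a by simp
    also have "\<dots> \<le> (1/a) * p (a *\<^sub>R x)" using hle[of "1/a" "a *\<^sub>R x"] a by simp
    finally have "a * p x \<le> p (a *\<^sub>R x)" using a by (simp add: field_simps)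
    then show ?thesis using hle[OF a, of x] by linarith
  qed
  have sub: "p (x + y) \<le> p x + p y" for x y
  proof -
    have "p (x+y) \<le> t + s" if t: "t \<in> T x" and s: "s \<in> T y" for t s
    proof -
      have tt: "t > 0" "(1/t) *\<^sub>R x \<in> U" and ss: "s > 0" "(1/s) *\<^sub>R y \<in> U" using t s T_def by auto
      have "(1/(t+s)) *\<^sub>R (x + y) = (t/(t+s)) *\<^sub>R ((1/t) *\<^sub>R x) + (s/(t+s)) *\<^sub>R ((1/s) *\<^sub>R y)"
        using tt ss by (simp add: scaleR_add_right)
      moreover have "(t/(t+s)) *\<^sub>R ((1/t) *\<^sub>R x) + (s/(t+s)) *\<^sub>R ((1/s) *\<^sub>R y) \<in> U"
        by (rule convexD[OF cU tt(2) ss(2)]) (use tt ss in \<open>auto simp: add_divide_distrib[symmetric]\<close>)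
      ultimately have "t + s \<in> T (x+y)" unfolding T_def using tt ss by simp
      then show ?thesis by (rule p_le)
    qed
    then have "p (x+y) - s \<le> p x" if "s \<in> T y" for s using that by (intro p_ge) (smt (verit))
    then have "p (x+y) - p x \<le> p y" by (intro p_ge) (smt (verit))
    then show ?thesis by simp
  qed
  have px0: "1 \<le> p (z - s0)"
  proof (rule ccontr)
    assume "\<not> 1 \<le> p (z - s0)"
    then have "p (z - s0) < 1" by simp
    then obtain t where "t \<in> T (z - s0)" "t < 1" unfolding p_def using Tne cInf_lessD by blast
    then have "1 \<in> T (z - s0)" using Tup by fastforce
    then show False using x0U unfolding T_def by simp
  qed
  have pU: "p u < 1" if uU: "u \<in> U" for u
  proof -
    obtain e where e: "e > 0" "(1+e) *\<^sub>R u \<in> U" using expand[OF uU] by blast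
    have "1/(1+e) \<in> T u" unfolding T_def using e by simp
    then have "p u \<le> 1/(1+e)" by (rule p_le)
    also have "\<dots> < 1" using e by simp
    finally show ?thesis .
  qed
  obtain g where g: "linear g" "g (z - s0) = 1" "\<And>x. g x \<le> p x"
    using hb_analytic[of p "z - s0"] sub hom pnn px0 by blast
  have gb: "norm (g x) \<le> norm x * (1/r)" for x
  proof -
    have "g x \<le> norm x / r" using g(3) pnorm order_trans by blast
    moreover have "- g x \<le> norm x / r" using g(3)[of "-x"] pnorm[of "-x"] linear_neg[OF g(1)] by simp
    ultimately show ?thesis by simp
  qed
  have blg: "bounded_linear g"
    using g(1) gb unfolding linear_iff by (intro bounded_linear_intro[of g "1/r"]) auto
  define n where "n = norm (z - s0)"
  have n: "n > 0" unfolding n_def using s0 zS by auto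
  define c where "c = g s0 + 1 - (r/2)/n"
  have gS: "g s \<le> c" if s: "s \<in> S" for s
  proof -
    define e where "e = ((r/2)/n) *\<^sub>R (z - s0)"
    have ne: "norm e = r/2" unfolding e_def n_def using n r n_def by simp
    have "s - s0 + e \<in> U" unfolding U_def using s ne r by (intro CollectI bexI[of _ s]) simp_all
    then have "p (s - s0 + e) < 1" by (rule pU)
    then have "g (s - s0 + e) < 1" using g(3) order_le_less_trans by blast
    moreover have "g (s - s0 + e) = g s - g s0 + (r/2)/n"
    proof -
      have "g (s - s0 + e) = g (s - s0) + g e" by (rule linear_add[OF g(1)])
      moreover have "g e = ((r/2)/n) * g (z - s0)" unfolding e_def by (simp only: linear_scale[OF g(1)] real_scaleR_def)
      moreover have "g (s - s0) = g s - g s0" by (rule linear_diff[OF g(1)])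
      ultimately show ?thesis using g(2) by simp
    qed
    ultimately show ?thesis unfolding c_def by simp
  qed
  have "g z = g s0 + 1" using g(1) g(2) by (simp add: linear_diff)
  then have "c < g z" unfolding c_def using r n by simp
  then show ?thesis using blg gS by blast
qed

definition lsc_on :: "'c::metric_space set \<Rightarrow> ('c \<Rightarrow> real) \<Rightarrow> bool" where
  "lsc_on C f \<longleftrightarrow> (\<forall>x\<in>C. \<forall>e>0. \<exists>d>0. \<forall>y\<in>C. dist y x < d \<longrightarrow> f x - e < f y)"

lemma lsc_on_subset:
  assumes "lsc_on C f" "D \<subseteq> C" shows "lsc_on D f"
  unfolding lsc_on_def
proof (intro ballI allI impI)
  fix x and e :: real assume x: "x \<in> D" and e: "e > 0"
  then have "x \<in> C" using assms(2) by blast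
  then obtain d where d: "d > 0" "\<forall>y\<in>C. dist y x < d \<longrightarrow> f x - e < f y" using assms(1) e unfolding lsc_on_def by blast
  have "\<forall>y\<in>D. dist y x < d \<longrightarrow> f x - e < f y" using d(2) assms(2) by blast
  then show "\<exists>d>0. \<forall>y\<in>D. dist y x < d \<longrightarrow> f x - e < f y" using d(1) by blast
qed

lemma closed_sublevel:
  assumes "closed C" "lsc_on C f"
  shows "closed {x\<in>C. f x \<le> c}"
proof -
  have main: "x \<in> {x\<in>C. f x \<le> c}" if ap: "\<forall>e>0. \<exists>y\<in>{x\<in>C. f x \<le> c}. dist y x < e" for x
  proof -
    have "\<forall>e>0. \<exists>y\<in>C. dist y x < e" using ap by force
    then have xC: "x \<in> C" using closed_approachable[OF assms(1), of x] by simp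
    have "f x \<le> c"
    proof (rule ccontr)
      assume "\<not> f x \<le> c"
      then have e: "f x - c > 0" by simp
      then obtain d where d: "d > 0" "\<forall>y\<in>C. dist y x < d \<longrightarrow> f x - (f x - c) < f y"
        using assms(2) xC unfolding lsc_on_def by blast
      obtain y where y: "y \<in> C" "f y \<le> c" "dist y x < d" using ap d(1) by blast
      have "f x - (f x - c) < f y" using d(2) y by blast
      then show False using y(2) by simp
    qed
    then show ?thesis using xC by simp
  qed
  have "closure {x\<in>C. f x \<le> c} \<subseteq> {x\<in>C. f x \<le> c}"
  proof
    fix x assume "x \<in> closure {x\<in>C. f x \<le> c}"
    then have "\<forall>e>0. \<exists>y\<in>{x\<in>C. f x \<le> c}. dist y x < e" by (simp only: closure_approachable)
    then show "x \<in> {x\<in>C. f x \<le> c}" by (rule main)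
  qed
  then show ?thesis by (simp only: closure_subset_eq)
qed

lemma lsc_on_add: "lsc_on C f \<Longrightarrow> lsc_on C g \<Longrightarrow> lsc_on C (\<lambda>x. f x + g x)"
  unfolding lsc_on_def
proof (intro ballI allI impI)
  fix x and e :: real
  assume f: "\<forall>x\<in>C. \<forall>e>0. \<exists>d>0. \<forall>y\<in>C. dist y x < d \<longrightarrow> f x - e < f y"
    and g: "\<forall>x\<in>C. \<forall>e>0. \<exists>d>0. \<forall>y\<in>C. dist y x < d \<longrightarrow> g x - e < g y" and x: "x \<in> C" and e: "0 < e"
  have e2: "e/2 > 0" using e by simp
  obtain d1 where d1: "d1 > 0" "\<forall>y\<in>C. dist y x < d1 \<longrightarrow> f x - e/2 < f y" using f x e2 by blast
  obtain d2 where d2: "d2 > 0" "\<forall>y\<in>C. dist y x < d2 \<longrightarrow> g x - e/2 < g y" using g x e2 by blast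
  have "\<forall>y\<in>C. dist y x < min d1 d2 \<longrightarrow> f x + g x - e < f y + g y"
  proof (intro ballI impI)
    fix y assume "y \<in> C" "dist y x < min d1 d2"
    then have "f x - e/2 < f y" "g x - e/2 < g y" using d1 d2 by auto
    then show "f x + g x - e < f y + g y" by linarith
  qed
  moreover have "min d1 d2 > 0" using d1 d2 by simp
  ultimately show "\<exists>d>0. \<forall>y\<in>C. dist y x < d \<longrightarrow> f x + g x - e < f y + g y" by blast
qed

lemma lsc_on_cmul: "lsc_on C f \<Longrightarrow> 0 \<le> a \<Longrightarrow> lsc_on C (\<lambda>x. a * f x)"
proof (cases "a = 0")
  case True then show ?thesis by (auto simp: lsc_on_def)
next
  case False
  assume f: "lsc_on C f" and a: "0 \<le> a"
  then have a: "a > 0" using False by simp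
  show ?thesis unfolding lsc_on_def
  proof (intro ballI allI impI)
    fix x and e :: real assume x: "x \<in> C" and e: "e > 0"
    have ea: "e/a > 0" using e a by simp
    obtain d where d: "d > 0" "\<forall>y\<in>C. dist y x < d \<longrightarrow> f x - e/a < f y" using f x ea unfolding lsc_on_def by blast
    have "a * f x - e < a * f y" if "f x - e/a < f y" for y
    proof -
      have "a * (f x - e/a) < a * f y" using that a by simp
      then show ?thesis using a by (simp add: right_diff_distrib)
    qed
    then show "\<exists>d>0. \<forall>y\<in>C. dist y x < d \<longrightarrow> a * f x - e < a * f y" using d by blast
  qed
qed

lemma lsc_on_const: "lsc_on C (\<lambda>x. a)" by (auto simp: lsc_on_def)

lemma lsc_on_sum: "finite I \<Longrightarrow> (\<And>i. i\<in>I \<Longrightarrow> lsc_on C (h i)) \<Longrightarrow> lsc_on C (\<lambda>x. \<Sum>i\<in>I. h i x)"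
proof (induction I rule: finite_induct)
  case empty
  then show ?case using lsc_on_const[of C 0] by simp
next
  case (insert j I)
  have "lsc_on C (\<lambda>x. h j x + (\<Sum>i\<in>I. h i x))"
    by (rule lsc_on_add) (use insert.prems insert.IH in blast)+
  then show ?case using insert.hyps by simp
qed

lemma lsc_on_continuous: "continuous_on C f \<Longrightarrow> lsc_on C f"
  unfolding lsc_on_def continuous_on_iff
proof (intro ballI allI impI)
  fix x and e :: real
  assume c: "\<forall>x\<in>C. \<forall>e>0. \<exists>d>0. \<forall>x'\<in>C. dist x' x < d \<longrightarrow> dist (f x') (f x) < e" and x: "x \<in> C" and e: "e > 0"
  then obtain d where d: "d > 0" "\<forall>x'\<in>C. dist x' x < d \<longrightarrow> dist (f x') (f x) < e" by blast
  have "f x - e < f y" if "dist (f y) (f x) < e" for y using that by (simp add: dist_real_def abs_less_iff)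
  then show "\<exists>d>0. \<forall>y\<in>C. dist y x < d \<longrightarrow> f x - e < f y" using d by blast
qed

lemma convex_on_sum_fun: "finite I \<Longrightarrow> convex C \<Longrightarrow> (\<And>i. i\<in>I \<Longrightarrow> convex_on C (h i)) \<Longrightarrow> convex_on C (\<lambda>x. \<Sum>i\<in>I. h i x)"
proof (induction I rule: finite_induct)
  case empty
  then show ?case using convex_on_const[of C 0] by simp
next
  case (insert j I)
  have "convex_on C (\<lambda>x. h j x + (\<Sum>i\<in>I. h i x))"
    by (rule convex_on_add) (use insert.prems insert.IH in blast)+
  then show ?case using insert.hyps by simp
qed

lemma convex_sublevel: "convex_on C f \<Longrightarrow> convex {x\<in>C. f x \<le> c}"
  unfolding convex_on_def convex_def
proof (clarify)
  fix x y and u v :: real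
  assume cC: "\<forall>x\<in>C. \<forall>y\<in>C. \<forall>u\<ge>0. \<forall>v\<ge>0. u + v = 1 \<longrightarrow> u *\<^sub>R x + v *\<^sub>R y \<in> C"
    and f: "\<forall>x\<in>C. \<forall>y\<in>C. \<forall>u\<ge>0. \<forall>v\<ge>0. u + v = 1 \<longrightarrow> f (u *\<^sub>R x + v *\<^sub>R y) \<le> u * f x + v * f y"
    and h: "x \<in> C" "f x \<le> c" "y \<in> C" "f y \<le> c" "0 \<le> u" "0 \<le> v" "u + v = 1"
  have "f (u *\<^sub>R x + v *\<^sub>R y) \<le> u * f x + v * f y" using f h by blast
  also have "\<dots> \<le> u * c + v * c" using h by (intro add_mono mult_left_mono) auto
  also have "\<dots> = c" using h by (simp add: distrib_right[symmetric])
  finally show "u *\<^sub>R x + v *\<^sub>R y \<in> C \<and> f (u *\<^sub>R x + v *\<^sub>R y) \<le> c" using cC h by blast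
qed

lemma minimax2:
  fixes f g :: "'c::real_normed_vector \<Rightarrow> real"
  assumes C: "compact C" "convex C" and cf: "convex_on C f" and cg: "convex_on C g"
    and lf: "lsc_on C f" and lg: "lsc_on C g"
    and hyp: "\<And>t. 0 \<le> t \<Longrightarrow> t \<le> 1 \<Longrightarrow> \<exists>\<mu>\<in>C. (1-t)*f \<mu> + t*g \<mu> \<le> 0"
  shows "\<exists>\<mu>\<in>C. f \<mu> \<le> 0 \<and> g \<mu> \<le> 0"
proof (rule ccontr)
  assume "\<not> ?thesis"
  then have ne: "\<And>\<mu>. \<mu> \<in> C \<Longrightarrow> 0 < f \<mu> \<or> 0 < g \<mu>" by force
  have Ccl: "closed C" using C compact_imp_closed by blast
  define A where "A = {\<mu>\<in>C. f \<mu> \<le> 0}"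
  define B where "B = {\<mu>\<in>C. g \<mu> \<le> 0}"
  have clA: "closed A" unfolding A_def by (rule closed_sublevel[OF Ccl lf])
  have clB: "closed B" unfolding B_def by (rule closed_sublevel[OF Ccl lg])
  define H where "H q = (1 - fst q) * f (snd q) + fst q * g (snd q)" for q :: "real \<times> 'c"
  define S where "S t = {\<mu>\<in>C. (1-t)*f \<mu> + t*g \<mu> \<le> 0}" for t
  have Sconv: "convex (S t)" if "0 \<le> t" "t \<le> 1" for t
  proof -
    have "convex_on C (\<lambda>\<mu>. (1-t)*f \<mu> + t*g \<mu>)"
      using that cf cg by (intro convex_on_add convex_on_cmul) auto
    then show ?thesis unfolding S_def by (rule convex_sublevel)
  qed
  have SAB: "S t \<subseteq> A \<union> B" if t: "0 \<le> t" "t \<le> 1" for t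
  proof
    fix \<mu> assume "\<mu> \<in> S t"
    then have m: "\<mu> \<in> C" "(1-t)*f \<mu> + t*g \<mu> \<le> 0" unfolding S_def by auto
    show "\<mu> \<in> A \<union> B"
    proof (rule ccontr)
      assume "\<mu> \<notin> A \<union> B"
      then have "f \<mu> > 0" "g \<mu> > 0" using m(1) unfolding A_def B_def by auto
      moreover have "(1-t)*f \<mu> \<ge> 0" "t * g \<mu> \<ge> 0" using t calculation by auto
      moreover have "t = 0 \<or> t * g \<mu> > 0" using t calculation by (auto intro: mult_pos_pos)
      ultimately show False using m(2) by auto
    qed
  qed
  have AB: "A \<inter> B = {}" using ne unfolding A_def B_def by force
  have lscH: "lsc_on ({0..1} \<times> C) H" unfolding lsc_on_def
  proof (intro ballI allI impI)
    fix q :: "real \<times> 'c" and e :: real assume q: "q \<in> {0..1} \<times> C" and e: "e > 0"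
    obtain t \<mu> where tm: "q = (t, \<mu>)" "0 \<le> t" "t \<le> 1" "\<mu> \<in> C" using q by auto
    define M where "M = \<bar>f \<mu>\<bar> + \<bar>g \<mu>\<bar> + 1"
    have M: "M > 0" unfolding M_def by simp
    have e2: "e/2 > 0" using e by simp
    obtain d1 where d1: "d1 > 0" "\<forall>y\<in>C. dist y \<mu> < d1 \<longrightarrow> f \<mu> - e/2 < f y" using lf tm(4) e2 unfolding lsc_on_def by blast
    obtain d2 where d2: "d2 > 0" "\<forall>y\<in>C. dist y \<mu> < d2 \<longrightarrow> g \<mu> - e/2 < g y" using lg tm(4) e2 unfolding lsc_on_def by blast
    define d where "d = min (min d1 d2) (e/(2*M))"
    have d: "d > 0" unfolding d_def using d1 d2 e M by simp
    have "H q - e < H q'" if q': "q' \<in> {0..1} \<times> C" and dq: "dist q' q < d" for q' :: "real \<times> 'c"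
    proof -
      obtain t' \<mu>' where tm': "q' = (t', \<mu>')" "0 \<le> t'" "t' \<le> 1" "\<mu>' \<in> C" using q' by auto
      have dt: "\<bar>t' - t\<bar> < e/(2*M)" using dist_fst_le[of q' q] dq tm tm' unfolding d_def by (simp add: dist_real_def)
      have dm: "dist \<mu>' \<mu> < d1" "dist \<mu>' \<mu> < d2" using dist_snd_le[of q' q] dq tm tm' unfolding d_def by auto
      have fm: "f \<mu> - e/2 < f \<mu>'" and gm: "g \<mu> - e/2 < g \<mu>'" using d1 d2 dm tm' by auto
      have "(1-t')*(f \<mu> - e/2) + t'*(g \<mu> - e/2) \<le> (1-t')*f \<mu>' + t'*g \<mu>'"
        using fm gm tm' by (intro add_mono mult_left_mono) auto
      moreover have "(1-t')*(f \<mu> - e/2) + t'*(g \<mu> - e/2) = (1-t')*f \<mu> + t'*g \<mu> - e/2"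
        by (simp add: field_simps)
      moreover have "\<bar>((1-t')*f \<mu> + t'*g \<mu>) - ((1-t)*f \<mu> + t*g \<mu>)\<bar> \<le> \<bar>t' - t\<bar> * M"
      proof -
        have "((1-t')*f \<mu> + t'*g \<mu>) - ((1-t)*f \<mu> + t*g \<mu>) = (t' - t) * (g \<mu> - f \<mu>)" by (simp add: algebra_simps)
        also have "\<bar>\<dots>\<bar> = \<bar>t' - t\<bar> * \<bar>g \<mu> - f \<mu>\<bar>" by (simp add: abs_mult)
        also have "\<dots> \<le> \<bar>t' - t\<bar> * M" unfolding M_def by (intro mult_left_mono) auto
        finally show ?thesis .
      qed
      moreover have "\<bar>t' - t\<bar> * M < e/2"
      proof -
        have "\<bar>t' - t\<bar> * M < e/(2*M) * M" using dt M by (intro mult_strict_right_mono) auto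
        also have "\<dots> = e/2" using M by simp
        finally show ?thesis .
      qed
      ultimately have "(1-t)*f \<mu> + t*g \<mu> - e < (1-t')*f \<mu>' + t'*g \<mu>'" unfolding abs_le_iff by linarith
      then show ?thesis unfolding H_def tm(1) tm'(1) by simp
    qed
    then show "\<exists>d>0. \<forall>y\<in>{0..1} \<times> C. dist y q < d \<longrightarrow> H q - e < H y" using d by blast
  qed
  have AC: "A \<subseteq> C" "B \<subseteq> C" unfolding A_def B_def by auto
  define TA where "TA = fst ` {q \<in> {0..1} \<times> A. H q \<le> 0}"
  define TB where "TB = fst ` {q \<in> {0..1} \<times> B. H q \<le> 0}"
  have clT: "closed (fst ` {q \<in> {0..1} \<times> X. H q \<le> 0})" if X: "closed X" "X \<subseteq> C" for X
  proof -
    have sub: "{0..1} \<times> X \<subseteq> {0..1} \<times> C" using X by auto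
    have cl: "closed {q \<in> {0..1} \<times> X. H q \<le> 0}"
      by (rule closed_sublevel[OF closed_Times[OF closed_atLeastAtMost X(1)] lsc_on_subset[OF lscH sub]])
    have "compact ({0..1::real} \<times> C)" using C compact_Times by blast
    moreover have "{q \<in> {0..1} \<times> X. H q \<le> 0} \<subseteq> {0..1::real} \<times> C" using X by auto
    ultimately have "compact (({0..1::real} \<times> C) \<inter> {q \<in> {0..1} \<times> X. H q \<le> 0})"
      using cl compact_Int_closed by blast
    moreover have "({0..1::real} \<times> C) \<inter> {q \<in> {0..1} \<times> X. H q \<le> 0} = {q \<in> {0..1} \<times> X. H q \<le> 0}" using X by auto
    ultimately have "compact {q \<in> {0..1} \<times> X. H q \<le> 0}" by simp
    then have "compact (fst ` {q \<in> {0..1} \<times> X. H q \<le> 0})"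
      by (rule compact_continuous_image[rotated]) (intro continuous_intros)
    then show ?thesis by (rule compact_imp_closed)
  qed
  have clTA: "closed TA" unfolding TA_def by (rule clT) (use clA AC in auto)
  have clTB: "closed TB" unfolding TB_def by (rule clT) (use clB AC in auto)
  have fstP: "t \<in> fst ` P \<longleftrightarrow> (\<exists>\<mu>. (t,\<mu>) \<in> P)" for t :: real and P :: "(real \<times> 'c) set"
  proof
    assume "t \<in> fst ` P"
    then obtain q where q: "q \<in> P" "t = fst q" by blast
    then show "\<exists>\<mu>. (t,\<mu>) \<in> P" by (cases q) auto
  next
    assume "\<exists>\<mu>. (t,\<mu>) \<in> P"
    then obtain \<mu> where "(t,\<mu>) \<in> P" by blast
    then show "t \<in> fst ` P" using image_eqI[of t fst "(t,\<mu>)"] by simp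
  qed
  have memX: "(\<exists>\<mu>. (t,\<mu>) \<in> {q \<in> {0..1} \<times> X. H q \<le> 0}) \<longleftrightarrow> 0 \<le> t \<and> t \<le> 1 \<and> S t \<inter> X \<noteq> {}"
    if "X \<subseteq> C" for t X
  proof
    assume "\<exists>\<mu>. (t,\<mu>) \<in> {q \<in> {0..1} \<times> X. H q \<le> 0}"
    then obtain \<mu> where m: "0 \<le> t" "t \<le> 1" "\<mu> \<in> X" "H (t,\<mu>) \<le> 0" by auto
    then have "\<mu> \<in> S t" unfolding S_def H_def using that by auto
    then show "0 \<le> t \<and> t \<le> 1 \<and> S t \<inter> X \<noteq> {}" using m by blast
  next
    assume a: "0 \<le> t \<and> t \<le> 1 \<and> S t \<inter> X \<noteq> {}"
    then obtain \<mu> where "\<mu> \<in> S t" "\<mu> \<in> X" by blast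
    then have "(t,\<mu>) \<in> {q \<in> {0..1} \<times> X. H q \<le> 0}" using a unfolding S_def H_def by auto
    then show "\<exists>\<mu>. (t,\<mu>) \<in> {q \<in> {0..1} \<times> X. H q \<le> 0}" by blast
  qed
  have TAm: "t \<in> TA \<longleftrightarrow> 0 \<le> t \<and> t \<le> 1 \<and> S t \<inter> A \<noteq> {}" for t
    unfolding TA_def fstP using memX[OF AC(1)] by blast
  have TBm: "t \<in> TB \<longleftrightarrow> 0 \<le> t \<and> t \<le> 1 \<and> S t \<inter> B \<noteq> {}" for t
    unfolding TB_def fstP using memX[OF AC(2)] by blast
  have cover: "{0..1} \<subseteq> TA \<union> TB"
  proof
    fix t :: real assume "t \<in> {0..1}"
    then have t: "0 \<le> t" "t \<le> 1" by auto
    obtain \<mu> where mu: "\<mu> \<in> S t" using hyp[OF t] unfolding S_def by blast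
    then have "\<mu> \<in> A \<union> B" using SAB[OF t] by blast
    then have "S t \<inter> A \<noteq> {} \<or> S t \<inter> B \<noteq> {}" using mu by blast
    then show "t \<in> TA \<union> TB" unfolding Un_iff TAm TBm using t by blast
  qed
  have disj: "TA \<inter> TB \<inter> {0..1} = {}"
  proof (rule ccontr)
    assume "TA \<inter> TB \<inter> {0..1} \<noteq> {}"
    then obtain t where t: "t \<in> TA" "t \<in> TB" by blast
    have ta: "0 \<le> t \<and> t \<le> 1 \<and> S t \<inter> A \<noteq> {}" using t(1) unfolding TAm .
    have tb: "S t \<inter> B \<noteq> {}" using t(2) unfolding TBm by blast
    have t01: "0 \<le> t" "t \<le> 1" "S t \<inter> A \<noteq> {}" "S t \<inter> B \<noteq> {}" using ta tb by auto
    have "connected (S t)" using Sconv[OF t01(1,2)] convex_connected by blast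
    moreover have "A \<inter> B \<inter> S t = {}" using AB by blast
    then have "closed A \<and> closed B \<and> S t \<subseteq> A \<union> B \<and> A \<inter> B \<inter> S t = {} \<and> A \<inter> S t \<noteq> {} \<and> B \<inter> S t \<noteq> {}"
      using clA clB SAB[OF t01(1,2)] t01(3,4) by (simp add: Int_commute)
    then have "\<exists>A' B'. closed A' \<and> closed B' \<and> S t \<subseteq> A' \<union> B' \<and> A' \<inter> B' \<inter> S t = {} \<and> A' \<inter> S t \<noteq> {} \<and> B' \<inter> S t \<noteq> {}"
      by (intro exI)
    ultimately show False using connected_closed by metis
  qed
  have "0 \<in> TA"
  proof -
    obtain \<mu> where "\<mu> \<in> C" "f \<mu> \<le> 0" using hyp[of 0] by auto
    then have "\<mu> \<in> S 0 \<inter> A" unfolding S_def A_def by simp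
    then show ?thesis unfolding TAm by auto
  qed
  moreover have "1 \<in> TB"
  proof -
    obtain \<mu> where "\<mu> \<in> C" "g \<mu> \<le> 0" using hyp[of 1] by auto
    then have "\<mu> \<in> S 1 \<inter> B" unfolding S_def B_def by simp
    then show ?thesis unfolding TBm by auto
  qed
  ultimately have ne: "TA \<inter> {0..1} \<noteq> {}" "TB \<inter> {0..1} \<noteq> {}" by auto
  have "connected {0..1::real}" by (rule connected_Icc)
  moreover have "closed TA \<and> closed TB \<and> {0..1} \<subseteq> TA \<union> TB \<and> TA \<inter> TB \<inter> {0..1} = {} \<and> TA \<inter> {0..1} \<noteq> {} \<and> TB \<inter> {0..1::real} \<noteq> {}"
    using clTA clTB cover disj ne by simp
  then have "\<exists>A' B'. closed A' \<and> closed B' \<and> {0..1::real} \<subseteq> A' \<union> B' \<and> A' \<inter> B' \<inter> {0..1} = {} \<and> A' \<inter> {0..1} \<noteq> {} \<and> B' \<inter> {0..1} \<noteq> {}"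
    by (intro exI)
  ultimately show False using connected_closed by metis
qed

lemma minimaxn:
  fixes h :: "'i \<Rightarrow> 'c::real_normed_vector \<Rightarrow> real"
  assumes "finite I" "I \<noteq> {}"
  shows "compact C \<Longrightarrow> convex C \<Longrightarrow> (\<forall>i\<in>I. convex_on C (h i) \<and> lsc_on C (h i)) \<Longrightarrow>
    (\<forall>l::'i\<Rightarrow>real. (\<forall>i\<in>I. 0 \<le> l i) \<and> sum l I = 1 \<longrightarrow> (\<exists>\<mu>\<in>C. (\<Sum>i\<in>I. l i * h i \<mu>) \<le> 0)) \<Longrightarrow>
    \<exists>\<mu>\<in>C. \<forall>i\<in>I. h i \<mu> \<le> 0"
  using assms
proof (induction I arbitrary: C rule: finite_ne_induct)
  case (singleton j)
  have "\<exists>\<mu>\<in>C. (\<Sum>i\<in>{j}. (\<lambda>_. 1::real) i * h i \<mu>) \<le> 0" using singleton.prems(4)[rule_format, of "\<lambda>_. 1"] by simp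
  then show ?case by auto
next
  case (insert j I)
  note cC = insert.prems(1) and vC = insert.prems(2) and hh = insert.prems(3) and hyp = insert.prems(4)
  define C' where "C' = {\<mu>\<in>C. h j \<mu> \<le> 0}"
  have clC: "closed C" using cC compact_imp_closed by blast
  have cj: "convex_on C (h j)" "lsc_on C (h j)" using hh by auto
  have clC': "closed C'" unfolding C'_def by (rule closed_sublevel[OF clC cj(2)])
  have C'C: "C' \<subseteq> C" unfolding C'_def by auto
  have "C \<inter> C' = C'" using C'C by blast
  then have cC': "compact C'" using compact_Int_closed[OF cC clC'] by simp
  have vC': "convex C'" unfolding C'_def by (rule convex_sublevel[OF cj(1)])
  have hh': "\<forall>i\<in>I. convex_on C' (h i) \<and> lsc_on C' (h i)"
    using hh C'C vC' convex_on_subset lsc_on_subset by blast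
  have hyp': "\<forall>l::'i\<Rightarrow>real. (\<forall>i\<in>I. 0 \<le> l i) \<and> sum l I = 1 \<longrightarrow> (\<exists>\<mu>\<in>C'. (\<Sum>i\<in>I. l i * h i \<mu>) \<le> 0)"
  proof (intro allI impI)
    fix l :: "'i \<Rightarrow> real" assume l: "(\<forall>i\<in>I. 0 \<le> l i) \<and> sum l I = 1"
    define f where "f \<mu> = (\<Sum>i\<in>I. l i * h i \<mu>)" for \<mu>
    have cf: "convex_on C f" unfolding f_def
      using hh l by (intro convex_on_sum_fun[OF insert.hyps(1) vC] convex_on_cmul) auto
    have lf: "lsc_on C f" unfolding f_def
      using hh l by (intro lsc_on_sum[OF insert.hyps(1)] lsc_on_cmul) auto
    have "\<exists>\<mu>\<in>C. f \<mu> \<le> 0 \<and> h j \<mu> \<le> 0"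
    proof (rule minimax2[OF cC vC cf cj(1) lf cj(2)])
      fix t :: real assume t: "0 \<le> t" "t \<le> 1"
      define l' where "l' i = (if i = j then t else (1-t) * l i)" for i
      have l'nn: "\<forall>i\<in>insert j I. 0 \<le> l' i" using t l unfolding l'_def by auto
      have "sum l' (insert j I) = t + sum l' I" using insert.hyps unfolding l'_def by simp
      also have "sum l' I = (1-t) * sum l I" unfolding l'_def sum_distrib_left using insert.hyps
        by (intro sum.cong) auto
      finally have "sum l' (insert j I) = 1" using l by simp
      then obtain \<mu> where \<mu>: "\<mu> \<in> C" "(\<Sum>i\<in>insert j I. l' i * h i \<mu>) \<le> 0" using hyp[rule_format, of l'] l'nn by blast
      have "(\<Sum>i\<in>insert j I. l' i * h i \<mu>) = t * h j \<mu> + (\<Sum>i\<in>I. l' i * h i \<mu>)"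
        using insert.hyps unfolding l'_def by simp
      also have "(\<Sum>i\<in>I. l' i * h i \<mu>) = (1-t) * f \<mu>" unfolding f_def l'_def sum_distrib_left using insert.hyps
        by (intro sum.cong) auto
      finally show "\<exists>\<mu>\<in>C. (1-t)*f \<mu> + t*h j \<mu> \<le> 0" using \<mu> by (intro bexI[of _ \<mu>]) auto
    qed
    then obtain \<mu> where "\<mu>\<in>C" "f \<mu> \<le> 0" "h j \<mu> \<le> 0" by blast
    then show "\<exists>\<mu>\<in>C'. (\<Sum>i\<in>I. l i * h i \<mu>) \<le> 0" unfolding C'_def f_def by blast
  qed
  from insert.IH[OF cC' vC' hh' hyp'] obtain \<mu> where m: "\<mu> \<in> C'" "\<forall>i\<in>I. h i \<mu> \<le> 0" by blast
  then have "\<mu> \<in> C" "h j \<mu> \<le> 0" unfolding C'_def by auto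
  then show ?case using m(2) by blast
qed

definition pairing :: "('a::real_normed_vector \<Rightarrow>\<^sub>L real) \<times> ('b::real_normed_vector \<Rightarrow>\<^sub>L real) \<Rightarrow> 'a \<times> 'b \<Rightarrow> real" where
  "pairing pq z = blinfun_apply (fst pq) (fst z) + blinfun_apply (snd pq) (snd z)"

definition Gam :: "('a::real_normed_vector \<Rightarrow>\<^sub>L ('b::real_normed_vector \<Rightarrow>\<^sub>L real)) \<Rightarrow> ('a \<Rightarrow>\<^sub>L ('a \<Rightarrow>\<^sub>L real)) \<Rightarrow> ('b \<Rightarrow>\<^sub>L ('b \<Rightarrow>\<^sub>L real))
   \<Rightarrow> 'a \<times> 'b \<Rightarrow> ('a \<Rightarrow>\<^sub>L real) \<times> ('b \<Rightarrow>\<^sub>L real)" where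
  "Gam A B1 B2 z = (- adj_app A (snd z) + blinfun_apply B1 (fst z), blinfun_apply A (fst z) + blinfun_apply B2 (snd z))"

lemma adj_app_apply: "blinfun_apply (adj_app A y) u = blinfun_apply (blinfun_apply A u) y"
proof -
  have "bounded_linear (\<lambda>x. blinfun_apply (blinfun_apply A x) y)"
    using bounded_linear_compose[OF blinfun.bounded_linear_left blinfun.bounded_linear_right] .
  then show ?thesis unfolding adj_app_def by (simp add: bounded_linear_Blinfun_apply)
qed

lemma P_exp: "pairing (Gam A B1 B2 (x,y)) (u,v) =
   - blinfun_apply (blinfun_apply A u) y + blinfun_apply (blinfun_apply B1 x) u + blinfun_apply (blinfun_apply A x) v + blinfun_apply (blinfun_apply B2 y) v"
  unfolding pairing_def Gam_def by (simp add: adj_app_apply blinfun.add_left blinfun.minus_left blinfun.diff_left)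

lemma P_skew:
  assumes "skew_adjoint B1" "skew_adjoint B2"
  shows "pairing (Gam A B1 B2 w) z = - pairing (Gam A B1 B2 z) w"
proof -
  obtain x y where w: "w = (x,y)" by (cases w)
  obtain u v where z: "z = (u,v)" by (cases z)
  have "blinfun_apply (blinfun_apply B1 x) u = - blinfun_apply (blinfun_apply B1 u) x"
    "blinfun_apply (blinfun_apply B2 y) v = - blinfun_apply (blinfun_apply B2 v) y"
    using assms unfolding skew_adjoint_def by blast+
  then show ?thesis unfolding w z P_exp by simp
qed

lemma P_diag:
  assumes "skew_adjoint B1" "skew_adjoint B2"
  shows "pairing (Gam A B1 B2 z) z = 0"
  using P_skew[OF assms, of A z z] by simp

lemma P_lin_z: "bounded_linear (\<lambda>z. pairing pq z)"
  unfolding pairing_def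
  by (intro bounded_linear_add bounded_linear_blinfun_apply bounded_linear_fst bounded_linear_snd)

lemma P_lin_w: "bounded_linear (\<lambda>w. pairing (Gam A B1 B2 w) z)"
proof -
  obtain u v where z: "z = (u,v)" by (cases z)
  have e: "(\<lambda>w. pairing (Gam A B1 B2 w) z) = (\<lambda>w. - blinfun_apply (blinfun_apply A u) (snd w) + blinfun_apply (blinfun_apply B1 (fst w)) u
      + blinfun_apply (blinfun_apply A (fst w)) v + blinfun_apply (blinfun_apply B2 (snd w)) v)"
  proof (rule ext)
    fix w :: "'a \<times> 'b"
    obtain x y where w: "w = (x,y)" by (cases w)
    show "pairing (Gam A B1 B2 w) z = - blinfun_apply (blinfun_apply A u) (snd w) + blinfun_apply (blinfun_apply B1 (fst w)) u
      + blinfun_apply (blinfun_apply A (fst w)) v + blinfun_apply (blinfun_apply B2 (snd w)) v"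
      unfolding w z P_exp by simp
  qed
  have l1: "bounded_linear (\<lambda>w. blinfun_apply (blinfun_apply A u) (snd w))"
    by (intro bounded_linear_blinfun_apply bounded_linear_snd)
  have l2: "bounded_linear (\<lambda>w. blinfun_apply (blinfun_apply B1 (fst w)) u)"
    using bounded_linear_compose[OF blinfun.bounded_linear_left bounded_linear_blinfun_apply[OF bounded_linear_fst, of B1]] .
  have l3: "bounded_linear (\<lambda>w. blinfun_apply (blinfun_apply A (fst w)) v)"
    using bounded_linear_compose[OF blinfun.bounded_linear_left bounded_linear_blinfun_apply[OF bounded_linear_fst, of A]] .
  have l4: "bounded_linear (\<lambda>w. blinfun_apply (blinfun_apply B2 (snd w)) v)"
    using bounded_linear_compose[OF blinfun.bounded_linear_left bounded_linear_blinfun_apply[OF bounded_linear_snd, of B2]] .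
  show ?thesis unfolding e by (intro bounded_linear_add bounded_linear_minus l1 l2 l3 l4)
qed

lemma phi_facts:
  fixes \<phi> :: "'c::real_normed_vector \<Rightarrow> ereal"
  assumes proper: "proper_fun \<phi>" and convex: "convex_fun \<phi>"
  defines "D \<equiv> {z. \<phi> z < \<infinity>}" and "f \<equiv> (\<lambda>z. real_of_ereal (\<phi> z))"
  shows "\<And>z. z \<in> D \<Longrightarrow> \<phi> z = ereal (f z)" and "convex D" and "convex_on D f"
proof -
  have nm: "\<phi> z \<noteq> -\<infinity>" for z using proper unfolding proper_fun_def by blast
  show fD: "\<phi> z = ereal (f z)" if "z \<in> D" for z
    using that nm[of z] unfolding D_def f_def by (cases "\<phi> z") auto
  have step: "t *\<^sub>R x + (1 - t) *\<^sub>R y \<in> D \<and> f (t *\<^sub>R x + (1 - t) *\<^sub>R y) \<le> t * f x + (1-t) * f y"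
    if "x \<in> D" "y \<in> D" "0 < t" "t < 1" for x y t
  proof -
    have "\<phi> (t *\<^sub>R x + (1 - t) *\<^sub>R y) \<le> ereal t * \<phi> x + ereal (1 - t) * \<phi> y"
      using convex[unfolded convex_fun_def, rule_format, of t x y] that(3,4) by blast
    also have "\<dots> = ereal (t * f x + (1-t) * f y)" using fD that by simp
    finally have le: "\<phi> (t *\<^sub>R x + (1 - t) *\<^sub>R y) \<le> ereal (t * f x + (1-t) * f y)" .
    have "\<phi> (t *\<^sub>R x + (1 - t) *\<^sub>R y) < \<infinity>" using le_less_trans[OF le, of \<infinity>] by simp
    then have inD: "t *\<^sub>R x + (1 - t) *\<^sub>R y \<in> D" unfolding D_def by simp
    then show ?thesis using le fD[OF inD] by simp
  qed
  have comb: "u *\<^sub>R x + v *\<^sub>R y \<in> D \<and> f (u *\<^sub>R x + v *\<^sub>R y) \<le> u * f x + v * f y"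
    if "x \<in> D" "y \<in> D" "0 \<le> u" "0 \<le> v" "u + v = 1" for x y u v
  proof (cases "u = 0 \<or> v = 0")
    case True
    then show ?thesis using that by auto
  next
    case False
    then have "0 < u" "u < 1" "v = 1 - u" using that by auto
    then show ?thesis using step[OF that(1,2)] by simp
  qed
  show cD: "convex D" unfolding convex_def using comb by blast
  show "convex_on D f" unfolding convex_on_def using cD comb by blast
qed

lemma phi_lsc:
  fixes \<phi> :: "'c::real_normed_vector \<Rightarrow> ereal"
  assumes proper: "proper_fun \<phi>" and lsc: "lsc_fun \<phi>"
  defines "D \<equiv> {z. \<phi> z < \<infinity>}" and "f \<equiv> (\<lambda>z. real_of_ereal (\<phi> z))"
  shows "lsc_on D f"
  unfolding lsc_on_def
proof (intro ballI allI impI)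
  fix x and e :: real assume x: "x \<in> D" and e: "e > 0"
  have nm: "\<phi> z \<noteq> -\<infinity>" for z using proper unfolding proper_fun_def by blast
  have fD: "\<phi> z = ereal (f z)" if "z \<in> D" for z
    using that nm[of z] unfolding D_def f_def by (cases "\<phi> z") auto
  have cl: "closed {z. \<phi> z \<le> ereal (f x - e)}" using lsc unfolding lsc_fun_def by blast
  have "x \<in> - {z. \<phi> z \<le> ereal (f x - e)}" using fD[OF x] e by simp
  then obtain d where d: "d > 0" "ball x d \<subseteq> - {z. \<phi> z \<le> ereal (f x - e)}"
    using cl open_contains_ball open_Compl by blast
  have "f x - e < f y" if "y \<in> D" "dist y x < d" for y
  proof -
    have "y \<in> ball x d" using that by (simp add: dist_commute)
    then have "\<not> \<phi> y \<le> ereal (f x - e)" using d by blast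
    then show ?thesis using fD[OF that(1)] by simp
  qed
  then show "\<exists>d>0. \<forall>y\<in>D. dist y x < d \<longrightarrow> f x - e < f y" using d(1) by blast
qed

lemma cluster_closed:
  assumes "inf (nhds x) F \<noteq> bot" "closed S" "eventually (\<lambda>y. y \<in> S) F"
  shows "x \<in> S"
proof (rule ccontr)
  assume "x \<notin> S"
  then have "eventually (\<lambda>y. y \<in> - S) (nhds x)" using assms(2) by (intro eventually_nhds_in_open) auto
  then have "eventually (\<lambda>y. y \<in> - S) (inf (nhds x) F)" by (rule filter_leD[OF inf_le1])
  moreover have "eventually (\<lambda>y. y \<in> S) (inf (nhds x) F)" using assms(3) by (rule filter_leD[OF inf_le2])
  ultimately have "eventually (\<lambda>y. False) (inf (nhds x) F)" by (rule eventually_elim2) auto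
  then show False using assms(1) eventually_False by blast
qed

lemma finite_step:
  fixes f :: "'c::real_normed_vector \<Rightarrow> real" and P :: "'c \<Rightarrow> 'c \<Rightarrow> real"
  assumes cD: "convex D" and cf: "convex_on D f" and lf: "lsc_on D f"
    and Pz: "\<And>w. bounded_linear (P w)" and Pw: "\<And>z. bounded_linear (\<lambda>w. P w z)" and Pd: "\<And>z. P z z = 0"
    and F: "finite F" "F \<subseteq> D" "F \<noteq> {}"
  shows "\<exists>z\<in>D. \<forall>w\<in>F. f z \<le> f w + P w z"
proof -
  define C where "C = convex hull F"
  define h where "h w z = f z + (- f w - P w z)" for w z
  have CD: "C \<subseteq> D" unfolding C_def using F(2) cD by (rule hull_minimal)
  have cC: "compact C" unfolding C_def using F(1) by (rule finite_imp_compact_convex_hull)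
  have vC: "convex C" unfolding C_def by simp
  have cfC: "convex_on C f" using cf CD vC by (rule convex_on_subset)
  have lfC: "lsc_on C f" using lf CD by (rule lsc_on_subset)
  have hw: "convex_on C (h w) \<and> lsc_on C (h w)" for w
  proof
    have lin: "linear (P w)" using Pz[of w] bounded_linear.linear by blast
    have "convex_on C (\<lambda>z. - f w - P w z)"
      unfolding convex_on_def
    proof (intro conjI vC ballI allI impI)
      fix x y and u v :: real assume "0 \<le> u" "0 \<le> v" "u + v = 1"
      moreover have "P w (u *\<^sub>R x + v *\<^sub>R y) = u * P w x + v * P w y"
        using lin by (simp add: linear_add linear_scale)
      ultimately show "- f w - P w (u *\<^sub>R x + v *\<^sub>R y) \<le> u * (- f w - P w x) + v * (- f w - P w y)"
        by (simp add: algebra_simps) (metis add_diff_cancel_left' distrib_right mult_1 order_refl)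
    qed
    then show "convex_on C (h w)" unfolding h_def using cfC by (intro convex_on_add)
    have "continuous_on C (\<lambda>z. - f w - P w z)"
      by (intro continuous_intros linear_continuous_on Pz)
    then have "lsc_on C (\<lambda>z. - f w - P w z)" by (rule lsc_on_continuous)
    then show "lsc_on C (h w)" unfolding h_def using lfC by (intro lsc_on_add)
  qed
  have hyp: "\<forall>l::'c\<Rightarrow>real. (\<forall>i\<in>F. 0 \<le> l i) \<and> sum l F = 1 \<longrightarrow> (\<exists>\<mu>\<in>C. (\<Sum>i\<in>F. l i * h i \<mu>) \<le> 0)"
  proof (intro allI impI)
    fix l :: "'c \<Rightarrow> real" assume l: "(\<forall>i\<in>F. 0 \<le> l i) \<and> sum l F = 1"
    define \<mu> where "\<mu> = (\<Sum>i\<in>F. l i *\<^sub>R i)"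
    have \<mu>C: "\<mu> \<in> C" unfolding \<mu>_def C_def
      using l F(1) by (intro convex_sum) (auto intro: hull_inc)
    have jensen: "f \<mu> \<le> (\<Sum>i\<in>F. l i * f i)" unfolding \<mu>_def
      using convex_on_sum[OF F(1) F(3) cf, of l "\<lambda>i. i"] l F(2) by auto
    have Psum: "(\<Sum>i\<in>F. l i * P i \<mu>) = 0"
    proof -
      have lin: "linear (\<lambda>w. P w \<mu>)" using Pw[of \<mu>] bounded_linear.linear by blast
      have "P (\<Sum>i\<in>F. l i *\<^sub>R i) \<mu> = (\<Sum>i\<in>F. P (l i *\<^sub>R i) \<mu>)"
        using linear_sum[OF lin, of "\<lambda>i. l i *\<^sub>R i" F] by simp
      also have "\<dots> = (\<Sum>i\<in>F. l i * P i \<mu>)"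
        using linear_scale[OF lin] by simp
      finally have "P (\<Sum>i\<in>F. l i *\<^sub>R i) \<mu> = (\<Sum>i\<in>F. l i * P i \<mu>)" .
      then show ?thesis using Pd[of \<mu>] unfolding \<mu>_def by simp
    qed
    have "(\<Sum>i\<in>F. l i * h i \<mu>) = (\<Sum>i\<in>F. l i) * f \<mu> - (\<Sum>i\<in>F. l i * f i) - (\<Sum>i\<in>F. l i * P i \<mu>)"
      unfolding h_def by (simp add: algebra_simps sum_distrib_right sum_distrib_left sum_subtractf sum.distrib)
    also have "\<dots> = f \<mu> - (\<Sum>i\<in>F. l i * f i)" using l Psum by simp
    also have "\<dots> \<le> 0" using jensen by simp
    finally show "\<exists>\<mu>\<in>C. (\<Sum>i\<in>F. l i * h i \<mu>) \<le> 0" using \<mu>C by blast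
  qed
  obtain \<mu> where \<mu>: "\<mu> \<in> C" "\<forall>i\<in>F. h i \<mu> \<le> 0"
    using minimaxn[OF F(1) F(3) cC vC _ hyp] hw by blast
  have "f \<mu> \<le> f w + P w \<mu>" if "w \<in> F" for w using \<mu>(2) that unfolding h_def by fastforce
  then show ?thesis using \<mu>(1) CD by blast
qed

lemma canon_emb_apply: "blinfun_apply (canon_emb x) p = blinfun_apply p x"
  unfolding canon_emb_def using blinfun.bounded_linear_left by (simp add: bounded_linear_Blinfun_apply)

lemma reflexive_rep:
  fixes \<Phi> :: "('a::real_normed_vector \<Rightarrow>\<^sub>L real) \<Rightarrow> real"
  assumes "reflexive_space TYPE('a)" "bounded_linear \<Phi>"
  shows "\<exists>x::'a. \<forall>p. blinfun_apply p x = \<Phi> p"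
proof -
  obtain x :: 'a where "canon_emb x = Blinfun \<Phi>" using assms(1) unfolding reflexive_space_def by (metis surjD)
  then have "blinfun_apply (canon_emb x) p = \<Phi> p" for p using assms(2) by (simp add: bounded_linear_Blinfun_apply)
  then show ?thesis using canon_emb_apply by metis
qed

lemma pairing_add: "pairing (a + b) z = pairing a z + pairing b z"
  unfolding pairing_def by (simp add: blinfun.add_left)

lemma pairing_scale: "pairing (c *\<^sub>R a) z = c * pairing a z"
  unfolding pairing_def by (simp add: blinfun.scaleR_left algebra_simps)

lemma pairing_bound:
  assumes "norm (fst z) + norm (snd z) \<le> R"
  shows "\<bar>pairing pq z\<bar> \<le> R * (norm (fst pq) + norm (snd pq))"
proof -
  have "\<bar>pairing pq z\<bar> \<le> norm (blinfun_apply (fst pq) (fst z)) + norm (blinfun_apply (snd pq) (snd z))"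
    unfolding pairing_def by (metis abs_triangle_ineq real_norm_def)
  also have "\<dots> \<le> norm (fst pq) * norm (fst z) + norm (snd pq) * norm (snd z)"
    by (intro add_mono norm_blinfun)
  also have "\<dots> \<le> norm (fst pq) * R + norm (snd pq) * R"
  proof -
    have "norm (fst z) \<le> R" "norm (snd z) \<le> R" using assms norm_ge_zero[of "fst z"] norm_ge_zero[of "snd z"] by linarith+
    then show ?thesis by (intro add_mono mult_left_mono) auto
  qed
  finally show ?thesis by (simp add: algebra_simps)
qed

lemma closed_fun_eq:
  fixes a b :: "'i" 
  shows "closed {g :: 'i \<Rightarrow> real. g a = c * g b}" "closed {g :: 'i \<Rightarrow> real. g a = g b + g d}"
    "closed {g :: 'i \<Rightarrow> real. g a \<le> r}" "closed {g :: 'i \<Rightarrow> real. g a \<in> {-r..r}}"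
proof -
  have ca: "continuous_on UNIV (\<lambda>g::'i \<Rightarrow> real. g x)" for x by (rule continuous_on_product_coordinates)
  show "closed {g :: 'i \<Rightarrow> real. g a = c * g b}" by (intro closed_Collect_eq ca continuous_intros)
  show "closed {g :: 'i \<Rightarrow> real. g a = g b + g d}" by (intro closed_Collect_eq ca continuous_intros)
  show "closed {g :: 'i \<Rightarrow> real. g a \<le> r}" by (intro closed_Collect_le ca continuous_intros)
  have "{g :: 'i \<Rightarrow> real. g a \<in> {-r..r}} = {g. g a \<le> r} \<inter> {g. -r \<le> g a}" by auto
  moreover have "closed {g :: 'i \<Rightarrow> real. -r \<le> g a}" by (intro closed_Collect_le ca continuous_intros)
  ultimately show "closed {g :: 'i \<Rightarrow> real. g a \<in> {-r..r}}" using \<open>closed {g. g a \<le> r}\<close> by auto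
qed

lemma compact_box:
  fixes b :: "'i \<Rightarrow> real"
  shows "compact (PiE UNIV (\<lambda>i. {-b i..b i}))"
proof -
  have "compactin (product_topology (\<lambda>i. euclidean) UNIV) (PiE UNIV (\<lambda>i. {-b i..b i}))"
    by (subst compactin_PiE) auto
  then show ?thesis unfolding euclidean_product_topology by simp
qed

lemma core:
  fixes \<phi> :: "'a::banach \<times> 'b::banach \<Rightarrow> ereal" and P :: "'a \<times> 'b \<Rightarrow> 'a \<times> 'b \<Rightarrow> real"
  assumes reflX: "reflexive_space TYPE('a)" and reflY: "reflexive_space TYPE('b)"
    and proper: "proper_fun \<phi>" and convex: "convex_fun \<phi>" and lsc: "lsc_fun \<phi>"
    and dom0: "(0, 0) \<in> dom_fun \<phi>"
    and coercive: "\<forall>M::real. \<exists>R>0. \<forall>x y. norm x + norm y \<ge> R \<longrightarrow> \<phi> (x, y) / ereal (norm x + norm y) \<ge> ereal M"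
    and Pz: "\<And>w. bounded_linear (P w)" and Pw: "\<And>z. bounded_linear (\<lambda>w. P w z)" and Pd: "\<And>z. P z z = 0"
  shows "\<exists>zb. \<phi> zb < \<infinity> \<and> (\<forall>w. \<phi> w < \<infinity> \<longrightarrow> \<phi> zb \<le> ereal (real_of_ereal (\<phi> w) + P w zb))"
proof -
  define D where "D = {z. \<phi> z < \<infinity>}"
  define f where "f = (\<lambda>z. real_of_ereal (\<phi> z))"
  have fD: "\<And>z. z \<in> D \<Longrightarrow> \<phi> z = ereal (f z)" and cD: "convex D" and cf: "convex_on D f"
    using phi_facts[OF proper convex] unfolding D_def f_def by blast+
  have lf: "lsc_on D f" using phi_lsc[OF proper lsc] unfolding D_def f_def .
  have D0: "0 \<in> D" using dom0 unfolding dom_fun_def D_def by (simp add: zero_prod_def)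
  define c0 where "c0 = f 0"
  have P0: "P 0 z = 0" for z using Pw[of z] bounded_linear.linear linear_0 by blast
  obtain R0 where R0: "R0 > 0" "\<And>z. z \<in> D \<Longrightarrow> f z \<le> c0 \<Longrightarrow> norm (fst z) + norm (snd z) \<le> R0"
  proof -
    define M where "M = \<bar>c0\<bar> + 1"
    obtain R where R: "R > 0" "\<forall>x y. norm x + norm y \<ge> R \<longrightarrow> \<phi> (x, y) / ereal (norm x + norm y) \<ge> ereal M"
      using coercive by blast
    define R0 where "R0 = max R 1"
    have "norm (fst z) + norm (snd z) \<le> R0" if z: "z \<in> D" "f z \<le> c0" for z
    proof (rule ccontr)
      assume "\<not> norm (fst z) + norm (snd z) \<le> R0"
      then have s: "norm (fst z) + norm (snd z) > R0" by simp
      define s where "s = norm (fst z) + norm (snd z)"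
      have s1: "s \<ge> 1" "s \<ge> R" using s unfolding s_def R0_def by auto
      have "\<phi> (fst z, snd z) / ereal s \<ge> ereal M" using R(2) s1 unfolding s_def by blast
      moreover have "\<phi> (fst z, snd z) = ereal (f z)" using fD[OF z(1)] by simp
      ultimately have "ereal (f z / s) \<ge> ereal M" using s1 by simp
      then have "f z / s \<ge> M" by simp
      then have "f z \<ge> M * s" using s1 by (simp add: le_divide_eq)
      moreover have "M * s \<ge> M * 1" using s1 unfolding M_def by (intro mult_left_mono) auto
      moreover have "M > c0" using abs_ge_self[of c0] unfolding M_def by linarith
      ultimately show False using z(2) by simp
    qed
    moreover have "R0 > 0" unfolding R0_def by simp
    ultimately show ?thesis using that by blast
  qed
  have ex: "\<exists>z. z \<in> D \<and> (\<forall>w\<in>insert 0 (F \<inter> D). f z \<le> f w + P w z)" if "finite F" for F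
  proof -
    have "\<exists>z\<in>D. \<forall>w\<in>insert 0 (F \<inter> D). f z \<le> f w + P w z"
      by (rule finite_step[OF cD cf lf Pz Pw Pd]) (use that D0 in auto)
    then show ?thesis by blast
  qed
  define zF where "zF F = (SOME z. z \<in> D \<and> (\<forall>w\<in>insert 0 (F \<inter> D). f z \<le> f w + P w z))" for F
  have zF: "zF F \<in> D" "\<And>w. w \<in> insert 0 (F \<inter> D) \<Longrightarrow> f (zF F) \<le> f w + P w (zF F)" if "finite F" for F
    using someI_ex[OF ex[OF that]] unfolding zF_def by blast+
  have zFb: "norm (fst (zF F)) + norm (snd (zF F)) \<le> R0" if "finite F" for F
    using R0(2)[OF zF(1)[OF that]] zF(2)[OF that, of 0] P0 unfolding c0_def by simp
  define ev where "ev F = (\<lambda>pq. pairing pq (zF F))" for F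
  define bnd where "bnd pq = R0 * (norm (fst pq) + norm (snd pq))" for pq :: "('a \<Rightarrow>\<^sub>L real) \<times> ('b \<Rightarrow>\<^sub>L real)"
  define Box where "Box = PiE UNIV (\<lambda>pq. {-bnd pq..bnd pq})"
  have cBox: "compact Box" unfolding Box_def by (rule compact_box)
  define Fl where "Fl = finite_subsets_at_top (UNIV :: ('a \<times> 'b) set)"
  define G where "G = filtermap ev Fl"
  have Gne: "G \<noteq> bot" unfolding G_def Fl_def by (simp add: filtermap_bot_iff)
  have evBox: "ev F \<in> Box" if "finite F" for F
  proof -
    have "ev F pq \<in> {-bnd pq..bnd pq}" for pq
      using pairing_bound[OF zFb[OF that], of pq] unfolding ev_def bnd_def by (simp add: abs_le_iff)
    then show ?thesis unfolding Box_def PiE_UNIV_domain by (simp add: Pi_iff)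
  qed
  have GBox: "eventually (\<lambda>g. g \<in> Box) G"
    unfolding G_def Fl_def eventually_filtermap using evBox by (intro eventually_finite_subsets_at_top_weakI) auto
  obtain \<Psi> where \<Psi>Box: "\<Psi> \<in> Box" and clus: "inf (nhds \<Psi>) G \<noteq> bot"
    using cBox[unfolded compact_filter] Gne GBox by blast
  have \<Psi>in: "\<Psi> \<in> S" if S: "closed S" and ev: "\<And>F. finite F \<Longrightarrow> w \<in> F \<Longrightarrow> ev F \<in> S" for S w
  proof (rule cluster_closed[OF clus S])
    have "eventually (\<lambda>F. ev F \<in> S) Fl" unfolding Fl_def eventually_finite_subsets_at_top
      using ev by (intro exI[of _ "{w}"]) auto
    then show "eventually (\<lambda>g. g \<in> S) G" unfolding G_def eventually_filtermap .
  qed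
  have \<Psi>add: "\<Psi> (a + b) = \<Psi> a + \<Psi> b" for a b
    using \<Psi>in[OF closed_fun_eq(2)[of "a+b" a b], of undefined] unfolding ev_def by (simp add: pairing_add)
  have \<Psi>scale: "\<Psi> (c *\<^sub>R a) = c * \<Psi> a" for c a
    using \<Psi>in[OF closed_fun_eq(1)[of "c *\<^sub>R a" c a], of undefined] unfolding ev_def by (simp add: pairing_scale)
  have \<Psi>bnd: "\<bar>\<Psi> pq\<bar> \<le> bnd pq" for pq
  proof -
    have "\<Psi> pq \<in> {-bnd pq..bnd pq}" using \<Psi>Box unfolding Box_def PiE_UNIV_domain Pi_iff by blast
    then show ?thesis by (simp add: abs_le_iff)
  qed
  have blX: "bounded_linear (\<lambda>p. \<Psi> (p, 0))"
  proof (rule bounded_linear_intro[of _ R0])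
    show "\<Psi> (p + p', 0) = \<Psi> (p, 0) + \<Psi> (p', 0)" for p p' using \<Psi>add[of "(p,0)" "(p',0)"] by simp
    show "\<Psi> (c *\<^sub>R p, 0) = c *\<^sub>R \<Psi> (p, 0)" for c p using \<Psi>scale[of c "(p,0)"] by simp
    show "norm (\<Psi> (p, 0)) \<le> norm p * R0" for p using \<Psi>bnd[of "(p,0)"] unfolding bnd_def by (simp add: mult.commute)
  qed
  have blY: "bounded_linear (\<lambda>q. \<Psi> (0, q))"
  proof (rule bounded_linear_intro[of _ R0])
    show "\<Psi> (0, q + q') = \<Psi> (0, q) + \<Psi> (0, q')" for q q' using \<Psi>add[of "(0,q)" "(0,q')"] by simp
    show "\<Psi> (0, c *\<^sub>R q) = c *\<^sub>R \<Psi> (0, q)" for c q using \<Psi>scale[of c "(0,q)"] by simp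
    show "norm (\<Psi> (0, q)) \<le> norm q * R0" for q using \<Psi>bnd[of "(0,q)"] unfolding bnd_def by (simp add: mult.commute)
  qed
  obtain xb :: 'a where xb: "\<And>p. blinfun_apply p xb = \<Psi> (p, 0)" using reflexive_rep[OF reflX blX] by blast
  obtain yb :: 'b where yb: "\<And>q. blinfun_apply q yb = \<Psi> (0, q)" using reflexive_rep[OF reflY blY] by blast
  define zb where "zb = (xb, yb)"
  have \<Psi>eq: "\<Psi> pq = pairing pq zb" for pq
  proof -
    have "\<Psi> ((fst pq, 0) + (0, snd pq)) = \<Psi> (fst pq, 0) + \<Psi> (0, snd pq)" by (rule \<Psi>add)
    then have "\<Psi> pq = \<Psi> (fst pq, 0) + \<Psi> (0, snd pq)" by simp
    then show ?thesis unfolding pairing_def zb_def using xb yb by simp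
  qed
  define K where "K w = {z. \<phi> z \<le> ereal (f w + P w z)}" for w
  have Kcl: "closed (K w)" for w
  proof -
    obtain L where L: "L > 0" "\<And>z. norm (P w z) \<le> norm z * L" using bounded_linear.pos_bounded[OF Pz[of w]] by blast
    have "closure (K w) \<subseteq> K w"
    proof
      fix x assume x: "x \<in> closure (K w)"
      have eps: "\<phi> x \<le> ereal (f w + P w x) + ereal e" if e: "e > 0" for e
      proof -
        define S where "S = {z. \<phi> z \<le> ereal (f w + P w x + e)}"
        have clS: "closed S" unfolding S_def using lsc unfolding lsc_fun_def by blast
        have "\<forall>\<epsilon>>0. \<exists>y\<in>S. dist y x < \<epsilon>"
        proof (intro allI impI)
          fix \<epsilon> :: real assume \<epsilon>: "\<epsilon> > 0"
          have "min \<epsilon> (e / L) > 0" using \<epsilon> e L by simp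
          then obtain y where y: "y \<in> K w" "dist y x < min \<epsilon> (e / L)" using x unfolding closure_approachable by blast
          have "norm (P w y - P w x) \<le> norm (y - x) * L"
            using L(2)[of "y - x"] linear_diff[OF bounded_linear.linear[OF Pz[of w]]] by simp
          also have "\<dots> < (e / L) * L" using y(2) L(1) by (intro mult_strict_right_mono) (auto simp: dist_norm)
          also have "\<dots> = e" using L(1) by simp
          finally have "P w y \<le> P w x + e" by simp
          have "\<phi> y \<le> ereal (f w + P w y)" using y(1) unfolding K_def by simp
          also have "\<dots> \<le> ereal (f w + P w x + e)" using \<open>P w y \<le> P w x + e\<close> by simp
          finally have "\<phi> y \<le> ereal (f w + P w x + e)" .
          moreover have "dist y x < \<epsilon>" using y(2) by simp
          ultimately show "\<exists>y\<in>S. dist y x < \<epsilon>" unfolding S_def by blast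
        qed
        then have "x \<in> S" using closed_approachable[OF clS] by blast
        then show ?thesis unfolding S_def by simp
      qed
      have "\<phi> x \<le> ereal (f w + P w x)" by (rule ereal_le_epsilon2[OF eps])
      then show "x \<in> K w" unfolding K_def by simp
    qed
    then show ?thesis by (simp only: closure_subset_eq)
  qed
  have Kcv: "convex (K w)" for w
    unfolding convex_def
  proof (intro ballI allI impI)
    fix x y and u v :: real assume x: "x \<in> K w" and y: "y \<in> K w" and uv: "0 \<le> u" "0 \<le> v" "u + v = 1"
    have lx: "\<phi> x \<le> ereal (f w + P w x)" using x unfolding K_def by simp
    have xD: "x \<in> D" unfolding D_def using le_less_trans[OF lx, of \<infinity>] by simp
    have ly: "\<phi> y \<le> ereal (f w + P w y)" using y unfolding K_def by simp
    have yD: "y \<in> D" unfolding D_def using le_less_trans[OF ly, of \<infinity>] by simp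
    have fx: "f x \<le> f w + P w x" using x fD[OF xD] unfolding K_def by simp
    have fy: "f y \<le> f w + P w y" using y fD[OF yD] unfolding K_def by simp
    have inD: "u *\<^sub>R x + v *\<^sub>R y \<in> D" using cD xD yD uv unfolding convex_def by blast
    have "f (u *\<^sub>R x + v *\<^sub>R y) \<le> u * f x + v * f y" using cf xD yD uv unfolding convex_on_def by blast
    also have "\<dots> \<le> u * (f w + P w x) + v * (f w + P w y)" using fx fy uv by (intro add_mono mult_left_mono) auto
    also have "\<dots> = f w + P w (u *\<^sub>R x + v *\<^sub>R y)"
    proof -
      have "P w (u *\<^sub>R x + v *\<^sub>R y) = u * P w x + v * P w y"
        using bounded_linear.linear[OF Pz[of w]] by (simp add: linear_add linear_scale)
      moreover have "u * (f w + P w x) + v * (f w + P w y) = (u+v) * f w + (u * P w x + v * P w y)"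
        by (simp add: algebra_simps)
      ultimately show ?thesis using uv(3) by simp
    qed
    finally show "u *\<^sub>R x + v *\<^sub>R y \<in> K w" unfolding K_def using fD[OF inD] by simp
  qed
  have zbK: "zb \<in> K w" if w: "w \<in> D" for w
  proof (rule ccontr)
    assume nz: "zb \<notin> K w"
    obtain g :: "'a \<times> 'b \<Rightarrow> real" and c :: real where g: "bounded_linear g" "\<forall>s\<in>K w. g s \<le> c" "c < g zb"
      using separation_point[OF Kcl Kcv nz] by blast
    have bl1: "bounded_linear (\<lambda>u::'a. g (u, 0))"
      using bounded_linear_compose[OF g(1) bounded_linear_Pair[OF bounded_linear_ident bounded_linear_zero]] .
    have bl2: "bounded_linear (\<lambda>v::'b. g (0, v))"
      using bounded_linear_compose[OF g(1) bounded_linear_Pair[OF bounded_linear_zero bounded_linear_ident]] .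
    define pq where "pq = (Blinfun (\<lambda>u::'a. g (u, 0)), Blinfun (\<lambda>v::'b. g (0, v)))"
    have pqg: "pairing pq s = g s" for s
    proof -
      have "g (fst s, 0) + g (0, snd s) = g ((fst s, 0) + (0, snd s))"
        by (rule linear_add[OF bounded_linear.linear[OF g(1)], symmetric])
      then show ?thesis unfolding pairing_def pq_def using bl1 bl2 by (simp add: bounded_linear_Blinfun_apply)
    qed
    have "\<Psi> \<in> {h. h pq \<le> c}"
    proof (rule \<Psi>in[OF closed_fun_eq(3)])
      fix F assume F: "finite F" "w \<in> F"
      have "f (zF F) \<le> f w + P w (zF F)" using zF(2)[OF F(1)] F(2) w by blast
      then have "zF F \<in> K w" unfolding K_def using fD[OF zF(1)[OF F(1)]] by simp
      then show "ev F \<in> {h. h pq \<le> c}" unfolding ev_def using pqg g(2) by simp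
    qed
    then have "g zb \<le> c" using \<Psi>eq pqg by simp
    then show False using g(3) by simp
  qed
  have "\<phi> zb < \<infinity>"
  proof -
    have "\<phi> zb \<le> ereal (f 0 + P 0 zb)" using zbK[OF D0] unfolding K_def by simp
    then show ?thesis using le_less_trans[of _ _ \<infinity>] by fastforce
  qed
  moreover have "\<phi> zb \<le> ereal (real_of_ereal (\<phi> w) + P w zb)" if "\<phi> w < \<infinity>" for w
    using zbK[of w] that unfolding K_def D_def f_def by simp
  ultimately show ?thesis by blast
qed

theorem proposition4p2:
  fixes \<phi> :: "'a::banach \<times> 'b::banach \<Rightarrow> ereal"
    and A :: "'a \<Rightarrow>\<^sub>L ('b \<Rightarrow>\<^sub>L real)"
    and B1 :: "'a \<Rightarrow>\<^sub>L ('a \<Rightarrow>\<^sub>L real)"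
    and B2 :: "'b \<Rightarrow>\<^sub>L ('b \<Rightarrow>\<^sub>L real)"
    and I :: "'a \<times> 'b \<Rightarrow> ereal"
  assumes reflX: "reflexive_space TYPE('a)"
    and reflY: "reflexive_space TYPE('b)"
    and proper: "proper_fun \<phi>"
    and convex: "convex_fun \<phi>"
    and lsc: "lsc_fun \<phi>"
    and dom0: "(0, 0) \<in> dom_fun \<phi>"
    and coercive: "\<forall>M::real. \<exists>R>0. \<forall>x y. norm x + norm y \<ge> R \<longrightarrow>
                      \<phi> (x, y) / ereal (norm x + norm y) \<ge> ereal M"
    and skew1: "skew_adjoint B1"
    and skew2: "skew_adjoint B2"
    and I_def: "\<forall>x y. I (x, y) = \<phi> (x, y) +
                   legendre \<phi> (- adj_app A y + blinfun_apply B1 x, blinfun_apply A x + blinfun_apply B2 y)"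
  shows "(INF z. I z) = 0 \<and>
         (\<exists>xb yb. I (xb, yb) = 0 \<and>
            (- adj_app A yb + blinfun_apply B1 xb, blinfun_apply A xb + blinfun_apply B2 yb) \<in> subdiff \<phi> (xb, yb))"
proof -
  define P where "P w z = pairing (Gam A B1 B2 w) z" for w z
  have Pz: "\<And>w. bounded_linear (P w)" unfolding P_def by (rule P_lin_z)
  have Pw: "\<And>z. bounded_linear (\<lambda>w. P w z)" unfolding P_def by (rule P_lin_w)
  have Pd: "\<And>z. P z z = 0" unfolding P_def by (rule P_diag[OF skew1 skew2])
  have Psk: "\<And>w z. P w z = - P z w" unfolding P_def by (rule P_skew[OF skew1 skew2])
  obtain zb where zb: "\<phi> zb < \<infinity>" "\<And>w. \<phi> w < \<infinity> \<Longrightarrow> \<phi> zb \<le> ereal (real_of_ereal (\<phi> w) + P w zb)"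
    using core[OF reflX reflY proper convex lsc dom0 coercive Pz Pw Pd] by blast
  have nm: "\<phi> z \<noteq> -\<infinity>" for z using proper unfolding proper_fun_def by blast
  have Ieq: "I z = \<phi> z + legendre \<phi> (Gam A B1 B2 z)" for z
    using I_def[rule_format, of "fst z" "snd z"] unfolding Gam_def by simp
  have leg: "legendre \<phi> pq = (SUP w. ereal (pairing pq w) - \<phi> w)" for pq
    unfolding legendre_def pairing_def by simp
  have d0: "\<phi> 0 < \<infinity>" using dom0 unfolding dom_fun_def by (simp add: zero_prod_def)
  obtain c0 where c0: "\<phi> 0 = ereal c0" using d0 nm[of 0] by (cases "\<phi> 0") auto
  have P0: "P z 0 = 0" for z using Pz[of z] bounded_linear.linear linear_0 by blast
  have Ige: "0 \<le> I z" for z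
  proof -
    define L where "L = legendre \<phi> (Gam A B1 B2 z)"
    have L1: "ereal (P z w) - \<phi> w \<le> L" for w unfolding L_def leg P_def by (rule SUP_upper) simp
    have "ereal (-c0) \<le> L" using L1[of 0] P0[of z] c0 by simp
    then have Lnm: "L \<noteq> -\<infinity>" by auto
    show ?thesis
    proof (cases "\<phi> z")
      case (real r)
      have "ereal (-r) \<le> L" using L1[of z] Pd[of z] real by simp
      then have "ereal r + ereal (-r) \<le> ereal r + L" by (rule add_left_mono)
      then show ?thesis unfolding Ieq L_def[symmetric] using real by (simp add: zero_ereal_def)
    next
      case PInf
      then show ?thesis unfolding Ieq L_def[symmetric] using Lnm by simp
    next
      case MInf
      then show ?thesis using nm by simp
    qed
  qed
  obtain r where r: "\<phi> zb = ereal r" using zb(1) nm[of zb] by (cases "\<phi> zb") auto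
  have key: "ereal r + ereal (P zb (w - zb)) \<le> \<phi> w" for w
  proof (cases "\<phi> w < \<infinity>")
    case True
    then obtain s where s: "\<phi> w = ereal s" using nm[of w] by (cases "\<phi> w") auto
    have "r \<le> s + P w zb" using zb(2)[OF True] r s by simp
    moreover have "P zb (w - zb) = - P w zb"
      using linear_diff[OF bounded_linear.linear[OF Pz[of zb]]] Pd[of zb] Psk[of zb w] by simp
    ultimately show ?thesis using s by simp
  next
    case False
    then show ?thesis by simp
  qed
  have legzb: "legendre \<phi> (Gam A B1 B2 zb) = ereal (-r)"
  proof (rule antisym)
    show "legendre \<phi> (Gam A B1 B2 zb) \<le> ereal (-r)" unfolding leg
    proof (rule SUP_least)
      fix w
      show "ereal (pairing (Gam A B1 B2 zb) w) - \<phi> w \<le> ereal (- r)"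
      proof (cases "\<phi> w")
        case (real s)
        have "ereal r + ereal (P zb (w - zb)) \<le> ereal s" using key[of w] real by simp
        moreover have "P zb (w - zb) = P zb w"
          using linear_diff[OF bounded_linear.linear[OF Pz[of zb]]] Pd[of zb] by simp
        ultimately show ?thesis using real unfolding P_def by simp
      next
        case PInf then show ?thesis by simp
      next
        case MInf then show ?thesis using nm by simp
      qed
    qed
    have "ereal (pairing (Gam A B1 B2 zb) zb) - \<phi> zb \<le> legendre \<phi> (Gam A B1 B2 zb)"
      unfolding leg by (rule SUP_upper) simp
    then show "ereal (-r) \<le> legendre \<phi> (Gam A B1 B2 zb)" using Pd[of zb] r unfolding P_def by simp
  qed
  have Izb: "I zb = 0" unfolding Ieq legzb r by simp
  have inf0: "(INF z. I z) = 0"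
  proof (rule antisym)
    show "(INF z. I z) \<le> 0" using Izb by (metis INF_lower UNIV_I)
    show "0 \<le> (INF z. I z)" using Ige by (rule INF_greatest)
  qed
  have sub: "Gam A B1 B2 zb \<in> subdiff \<phi> zb"
    unfolding subdiff_def
  proof (intro CollectI conjI allI)
    show "\<phi> zb \<noteq> \<infinity>" using zb(1) by simp
    fix w
    have "blinfun_apply (fst (Gam A B1 B2 zb)) (fst w - fst zb) + blinfun_apply (snd (Gam A B1 B2 zb)) (snd w - snd zb)
      = P zb (w - zb)" unfolding P_def pairing_def by simp
    then show "\<phi> zb + ereal (blinfun_apply (fst (Gam A B1 B2 zb)) (fst w - fst zb) + blinfun_apply (snd (Gam A B1 B2 zb)) (snd w - snd zb)) \<le> \<phi> w"
      using key[of w] r by simp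
  qed
  have "I (fst zb, snd zb) = 0 \<and>
      (- adj_app A (snd zb) + blinfun_apply B1 (fst zb), blinfun_apply A (fst zb) + blinfun_apply B2 (snd zb)) \<in> subdiff \<phi> (fst zb, snd zb)"
    using Izb sub unfolding Gam_def by simp
  then show ?thesis using inf0 by blast
qed

end
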